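(* Let $G=(N,E)$ be a DAG and $G'=G^*$. Then $\mathcal{P}^{G'}\supseteq\mathcal{P}^G$ if and only if $\mathrm{pa}_G(s)$ and $\mathrm{ch}_G(s)$ are complete for all $s\in N$.
   Context: DAG: finite directed graph without directed cycles; $\mathrm{pa}_G(s)$, $\mathrm{ch}_G(s)$ = parents/children of $s$. $G^*=(N,\{(t,s):(s,t)\in E\})$ is $G$ with all edges reversed. Two nodes are joined if an edge connects them; a set is complete if every pair of its elements is joined. Each node $s$ has a state space $\mathsf{X}_s$ (finite set with counting measure, or finite-dimensional real vector space with Lebesgue measure $\mu_s$), $\mu=\otimes_s\mu_s$; $\mathcal{P}^G$ is the set of probability distributions on $\times_s\mathsf{X}_s$ with $\mu$-density $p(x)=\prod_{s}k^s(x_s\mid x_{\mathrm{pa}_G(s)})$ for some nonnegative measurable $k^s$ with $\int k^s(x_s\mid x_{\mathrm{pa}_G(s)})\,d\mu_s(x_s)=1$. *)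

theory Defs
  imports "HOL-Probability.Probability"
begin

text \<open>A DAG on the finite node type 'n is an edge relation E with no directed cycles
  (library notion acyclic: no x with (x,x) in the transitive closure; this excludes loops).\<close>

definition pa :: "('n \<times> 'n) set \<Rightarrow> 'n \<Rightarrow> 'n set" where
  "pa E s = {t. (t, s) \<in> E}"

definition ch :: "('n \<times> 'n) set \<Rightarrow> 'n \<Rightarrow> 'n set" where
  "ch E s = {t. (s, t) \<in> E}"

text \<open>The reversed graph G* is given by converse E.\<close>

definition joined :: "('n \<times> 'n) set \<Rightarrow> 'n \<Rightarrow> 'n \<Rightarrow> bool" where
  "joined E a b \<longleftrightarrow> (a, b) \<in> E \<or> (b, a) \<in> E"

definition complete_set :: "('n \<times> 'n) set \<Rightarrow> 'n set \<Rightarrow> bool" where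
  "complete_set E A \<longleftrightarrow> (\<forall>a\<in>A. \<forall>b\<in>A. a \<noteq> b \<longrightarrow> joined E a b)"

text \<open>State spaces, all encoded in the common value type nat => real: either a finite set
  (with at least two points) with counting measure, or R^d (d >= 1) realised as the product
  of d copies of the Lebesgue-Borel measure.\<close>

definition state_space :: "(nat \<Rightarrow> real) measure \<Rightarrow> bool" where
  "state_space M \<longleftrightarrow>
     (\<exists>X. finite X \<and> 2 \<le> card X \<and> M = count_space X) \<or>
     (\<exists>d::nat. 1 \<le> d \<and> M = PiM {..<d} (\<lambda>_. (lborel :: real measure)))"

definition joint_measure :: "('n::finite \<Rightarrow> 'v measure) \<Rightarrow> ('n \<Rightarrow> 'v) measure" where
  "joint_measure \<mu> = PiM UNIV \<mu>"

definition is_kernel ::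
  "('n \<times> 'n) set \<Rightarrow> ('n \<Rightarrow> 'v measure) \<Rightarrow> 'n \<Rightarrow> ('v \<Rightarrow> ('n \<Rightarrow> 'v) \<Rightarrow> real) \<Rightarrow> bool" where
  "is_kernel E \<mu> s k \<longleftrightarrow>
     (\<forall>y z. 0 \<le> k y z) \<and>
     (\<lambda>(y, z). k y z) \<in> borel_measurable (\<mu> s \<Otimes>\<^sub>M PiM (pa E s) \<mu>) \<and>
     (\<forall>z\<in>space (PiM (pa E s) \<mu>). (\<integral>\<^sup>+ y. ennreal (k y z) \<partial>\<mu> s) = 1)"

definition model :: "('n::finite \<times> 'n) set \<Rightarrow> ('n \<Rightarrow> 'v measure) \<Rightarrow> ('n \<Rightarrow> 'v) measure set" where
  "model E \<mu> = {P. prob_space P \<and>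
     (\<exists>k. (\<forall>s. is_kernel E \<mu> s (k s)) \<and>
          P = density (joint_measure \<mu>)
                (\<lambda>x. ennreal (\<Prod>s\<in>UNIV. k s (x s) (restrict x (pa E s)))))}"

end

theory Submission
  imports Defs
begin
lemma ss_sigma_finite:
  assumes "state_space M" shows "sigma_finite_measure M"
proof -
  from assms consider (fin) X where "finite X" "M = count_space X"
    | (leb) d where "M = PiM {..<(d::nat)} (\<lambda>_. (lborel :: real measure))"
    unfolding state_space_def by blast
  then show ?thesis
  proof cases
    case fin
    then show ?thesis
      using finite_measure_count_space[OF fin(1)]
      by (simp add: finite_measure.sigma_finite_measure)
  next
    case leb
    interpret product_sigma_finite "\<lambda>_::nat. (lborel::real measure)"
      by (simp add: product_sigma_finite_def lborel.sigma_finite_measure_axioms)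
    show ?thesis using leb sigma_finite[of "{..<d}"] by simp
  qed
qed

lemma ss_two_sets:
  assumes "state_space M"
  shows "\<exists>U0 U1. U0 \<in> sets M \<and> U1 \<in> sets M \<and> U0 \<inter> U1 = {} \<and>
            emeasure M U0 = 1 \<and> emeasure M U1 = 1"
proof -
  from assms consider (fin) X where "finite X" "2 \<le> card X" "M = count_space X"
    | (leb) d where "1 \<le> d" "M = PiM {..<(d::nat)} (\<lambda>_. (lborel :: real measure))"
    unfolding state_space_def by blast
  then show ?thesis
  proof cases
    case fin
    then obtain x y where xy: "x \<in> X" "y \<in> X" "x \<noteq> y"
      by (metis One_nat_def card.empty card_le_Suc0_iff_eq not_less_eq_eq numeral_2_eq_2 zero_le)
    show ?thesis
      apply (rule exI[of _ "{x}"], rule exI[of _ "{y}"])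
      using fin xy by auto
  next
    case leb
    interpret product_sigma_finite "\<lambda>_::nat. (lborel::real measure)"
      by (simp add: product_sigma_finite_def lborel.sigma_finite_measure_axioms)
    define U0 where "U0 = PiE {..<d} (\<lambda>_. {0..(1::real)})"
    define U1 where "U1 = PiE {..<d} (\<lambda>i. if i = 0 then {2..(3::real)} else {0..1})"
    have "U0 \<inter> U1 = {}"
    proof (rule ccontr)
      assume "U0 \<inter> U1 \<noteq> {}"
      then obtain f where f: "f \<in> U0" "f \<in> U1" by blast
      have z: "0 \<in> {..<d}" using leb(1) by auto
      have "f 0 \<in> {0..1}" using PiE_mem[OF f(1)[unfolded U0_def] z] by simp
      moreover have "f 0 \<in> {2..3}" using PiE_mem[OF f(2)[unfolded U1_def] z] by simp
      ultimately have "f 0 \<in> {0..1}" "f 0 \<in> {2..3}" by auto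
      then show False by auto
    qed
    moreover have "emeasure M U0 = 1" unfolding U0_def leb(2)
      by (subst emeasure_PiM) auto
    moreover have "emeasure M U1 = 1" unfolding U1_def leb(2)
      by (subst emeasure_PiM) (auto intro!: prod.neutral)
    moreover have "U0 \<in> sets M" "U1 \<in> sets M" unfolding U0_def U1_def leb(2)
      by (auto intro!: sets_PiM_I_finite)
    ultimately show ?thesis by blast
  qed
qed

definition kprod :: "('n \<times> 'n) set \<Rightarrow> ('n \<Rightarrow> 'v \<Rightarrow> ('n \<Rightarrow> 'v) \<Rightarrow> real) \<Rightarrow> 'n set \<Rightarrow> ('n \<Rightarrow> 'v) \<Rightarrow> ennreal" where
  "kprod R h S x = (\<Prod>v\<in>S. ennreal (h v (x v) (restrict x (pa R v))))"

lemma kernel_meas: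
  assumes k: "is_kernel R \<mu> v k" and sub: "v \<in> S" "pa R v \<subseteq> S"
  shows "(\<lambda>x. k (x v) (restrict x (pa R v))) \<in> borel_measurable (PiM S \<mu>)"
proof -
  have m: "(\<lambda>(y, z). k y z) \<in> borel_measurable (\<mu> v \<Otimes>\<^sub>M PiM (pa R v) \<mu>)"
    using k unfolding is_kernel_def by blast
  have p: "(\<lambda>x. (x v, restrict x (pa R v))) \<in> measurable (PiM S \<mu>) (\<mu> v \<Otimes>\<^sub>M PiM (pa R v) \<mu>)"
    using sub by (intro measurable_Pair measurable_component_singleton measurable_restrict_subset) auto
  show ?thesis using measurable_comp[OF p m] by (simp add: comp_def)
qed

lemma kprod_meas:
  assumes k: "\<And>v. is_kernel R \<mu> v (h v)" and anc: "\<And>v. v \<in> T \<Longrightarrow> pa R v \<subseteq> S" and "T \<subseteq> S"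
  shows "kprod R h T \<in> borel_measurable (PiM S \<mu>)"
  unfolding kprod_def
  using assms by (intro borel_measurable_prod_ennreal measurable_compose[OF kernel_meas[OF k] measurable_ennreal]) auto

lemma exists_sink:
  fixes R :: "('n::finite \<times> 'n) set"
  assumes "acyclic R" "X \<noteq> {}"
  shows "\<exists>t\<in>X. \<forall>c\<in>X. (t, c) \<notin> R"
proof -
  have "wf (R\<inverse>)" using assms(1) by (intro finite_acyclic_wf_converse) auto
  moreover obtain x where "x \<in> X" using assms(2) by blast
  ultimately obtain z where "z \<in> X" "\<And>y. (y, z) \<in> R\<inverse> \<Longrightarrow> y \<notin> X"
    by (metis wfE_min)
  then show ?thesis by blast
qed

lemma restrict_upd_notin: "t \<notin> A \<Longrightarrow> restrict (x(t := y)) A = restrict x A"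
  by (auto simp: restrict_def)

lemma kernel_int:
  assumes "is_kernel R \<mu> v k" "z \<in> space (PiM (pa R v) \<mu>)"
  shows "(\<integral>\<^sup>+ y. ennreal (k y z) \<partial>\<mu> v) = 1"
  using assms unfolding is_kernel_def by blast

lemma kernel_nonneg: "is_kernel R \<mu> v k \<Longrightarrow> 0 \<le> k y z"
  unfolding is_kernel_def by blast

lemma kernel_meas2:
  assumes "is_kernel R \<mu> v k" "z \<in> space (PiM (pa R v) \<mu>)"
  shows "(\<lambda>y. k y z) \<in> borel_measurable (\<mu> v)"
proof -
  have m: "(\<lambda>(y, z). k y z) \<in> borel_measurable (\<mu> v \<Otimes>\<^sub>M PiM (pa R v) \<mu>)"
    using assms unfolding is_kernel_def by blast
  show ?thesis using measurable_Pair1[OF m assms(2)] by simp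
qed

lemma sink_removal:
  fixes R :: "('n::finite \<times> 'n) set"
  assumes sf: "\<And>v. sigma_finite_measure (\<mu> v)"
    and k: "\<And>v. is_kernel R \<mu> v (h v)"
    and anc: "\<And>v. v \<in> S \<Longrightarrow> pa R v \<subseteq> S"
    and t: "t \<in> S" and sink: "\<And>v. v \<in> S \<Longrightarrow> t \<notin> pa R v"
    and F: "F \<in> borel_measurable (PiM S \<mu>)"
  shows "(\<integral>\<^sup>+x. kprod R h S x * F x \<partial>PiM S \<mu>) =
         (\<integral>\<^sup>+x. kprod R h (S - {t}) x *
             (\<integral>\<^sup>+y. ennreal (h t y (restrict x (pa R t))) * F (x(t := y)) \<partial>\<mu> t) \<partial>PiM (S - {t}) \<mu>)"
proof -
  interpret product_sigma_finite \<mu> by (simp add: product_sigma_finite_def sf)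
  have S: "S = insert t (S - {t})" using t by auto
  have meas: "(\<lambda>x. kprod R h S x * F x) \<in> borel_measurable (PiM (insert t (S - {t})) \<mu>)"
    unfolding insert_Diff[OF t] using kprod_meas[OF k anc, of S] F by auto
  have "(\<integral>\<^sup>+x. kprod R h S x * F x \<partial>PiM S \<mu>) =
        (\<integral>\<^sup>+x. kprod R h S x * F x \<partial>PiM (insert t (S - {t})) \<mu>)" by (simp only: insert_Diff[OF t])
  also have "\<dots> = (\<integral>\<^sup>+ x. (\<integral>\<^sup>+ y. kprod R h S (x(t := y)) * F (x(t := y)) \<partial>\<mu> t) \<partial>PiM (S - {t}) \<mu>)"
    by (rule product_nn_integral_insert[OF _ _ meas]) auto
  also have "\<dots> = (\<integral>\<^sup>+x. kprod R h (S - {t}) x *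
             (\<integral>\<^sup>+y. ennreal (h t y (restrict x (pa R t))) * F (x(t := y)) \<partial>\<mu> t) \<partial>PiM (S - {t}) \<mu>)"
  proof (rule nn_integral_cong)
    fix x assume x: "x \<in> space (PiM (S - {t}) \<mu>)"
    have pr: "kprod R h S (x(t := y)) = ennreal (h t y (restrict x (pa R t))) * kprod R h (S - {t}) x" for y
    proof -
      have "kprod R h S (x(t := y)) = ennreal (h t y (restrict (x(t := y)) (pa R t))) *
              (\<Prod>v\<in>S - {t}. ennreal (h v ((x(t := y)) v) (restrict (x(t := y)) (pa R v))))"
        unfolding kprod_def by (subst S) (simp add: prod.insert_remove)
      also have "(\<Prod>v\<in>S - {t}. ennreal (h v ((x(t := y)) v) (restrict (x(t := y)) (pa R v)))) = kprod R h (S - {t}) x"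
        unfolding kprod_def using sink by (intro prod.cong) (auto simp: restrict_upd_notin)
      finally show ?thesis by (simp only: restrict_upd_notin[OF sink[OF t]])
    qed
    have upd: "(\<lambda>y. x(t := y)) \<in> measurable (\<mu> t) (PiM S \<mu>)"
      using measurable_component_update[OF x, of t] sink[OF t] unfolding insert_Diff[OF t] by simp
    have m2: "(\<lambda>y. ennreal (h t y (restrict x (pa R t))) * F (x(t := y))) \<in> borel_measurable (\<mu> t)"
    proof -
      have "restrict x (pa R t) \<in> space (PiM (pa R t) \<mu>)"
        using x anc[OF t] sink[OF t] by (auto simp: space_PiM PiE_iff)
      then show ?thesis
        using kernel_meas2[OF k] measurable_comp[OF upd F] by (auto simp: comp_def)
    qed
    show "(\<integral>\<^sup>+ y. kprod R h S (x(t := y)) * F (x(t := y)) \<partial>\<mu> t) =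
      kprod R h (S - {t}) x * (\<integral>\<^sup>+y. ennreal (h t y (restrict x (pa R t))) * F (x(t := y)) \<partial>\<mu> t)"
    proof -
      have eq: "kprod R h S (x(t := y)) * F (x(t := y)) =
          kprod R h (S - {t}) x * (ennreal (h t y (restrict x (pa R t))) * F (x(t := y)))" for y
        unfolding pr by (simp only: mult.assoc mult.commute mult.left_commute)
      show ?thesis by (simp only: eq) (rule nn_integral_cmult[OF m2])
    qed
  qed
  finally show ?thesis .
qed

lemma marginal_aux:
  fixes R :: "('n::finite \<times> 'n) set"
  assumes sf: "\<And>v. sigma_finite_measure (\<mu> v)"
    and k: "\<And>v. is_kernel R \<mu> v (h v)"
    and acyc: "acyclic R"
    and ancA: "\<And>v. v \<in> A \<Longrightarrow> pa R v \<subseteq> A"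
    and F: "F \<in> borel_measurable (PiM A \<mu>)"
  shows "card (S - A) = n \<Longrightarrow> A \<subseteq> S \<Longrightarrow> (\<And>v. v \<in> S \<Longrightarrow> pa R v \<subseteq> S) \<Longrightarrow>
     (\<integral>\<^sup>+x. kprod R h S x * F (restrict x A) \<partial>PiM S \<mu>) = (\<integral>\<^sup>+x. kprod R h A x * F x \<partial>PiM A \<mu>)"
proof (induction n arbitrary: S)
  case 0
  then have "S = A" by auto
  then show ?case
    by (auto intro!: nn_integral_cong simp: space_PiM simp del: restrict_apply)
next
  case (Suc n)
  then have "S - A \<noteq> {}" by auto
  from exists_sink[OF acyc this] obtain t where t: "t \<in> S - A" and tmax: "\<And>c. c \<in> S - A \<Longrightarrow> (t, c) \<notin> R"
    by blast
  have sink: "t \<notin> pa R v" if "v \<in> S" for v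
  proof
    assume "t \<in> pa R v"
    then have tv: "(t, v) \<in> R" by (simp add: pa_def)
    show False
    proof (cases "v \<in> A")
      case True then show False using ancA[OF True] \<open>t \<in> pa R v\<close> t by auto
    next
      case False then show False using tmax[of v] that tv by auto
    qed
  qed
  have tS: "t \<in> S" using t by auto
  have Fm: "(\<lambda>x. F (restrict x A)) \<in> borel_measurable (PiM S \<mu>)"
    using measurable_comp[OF measurable_restrict_subset[OF Suc.prems(2)] F] by (simp add: comp_def)
  have "(\<integral>\<^sup>+x. kprod R h S x * F (restrict x A) \<partial>PiM S \<mu>) =
        (\<integral>\<^sup>+x. kprod R h (S - {t}) x *
             (\<integral>\<^sup>+y. ennreal (h t y (restrict x (pa R t))) * F (restrict (x(t := y)) A) \<partial>\<mu> t) \<partial>PiM (S - {t}) \<mu>)"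
    by (rule sink_removal[OF sf k Suc.prems(3) tS sink Fm])
  also have "\<dots> = (\<integral>\<^sup>+x. kprod R h (S - {t}) x * F (restrict x A) \<partial>PiM (S - {t}) \<mu>)"
  proof (rule nn_integral_cong)
    fix x assume x: "x \<in> space (PiM (S - {t}) \<mu>)"
    have tA: "t \<notin> A" using t by auto
    have z: "restrict x (pa R t) \<in> space (PiM (pa R t) \<mu>)"
      using x Suc.prems(3)[OF tS] sink[OF tS] by (auto simp: space_PiM PiE_iff)
    have "(\<integral>\<^sup>+y. ennreal (h t y (restrict x (pa R t))) * F (restrict (x(t := y)) A) \<partial>\<mu> t)
        = (\<integral>\<^sup>+y. ennreal (h t y (restrict x (pa R t))) * F (restrict x A) \<partial>\<mu> t)"
      by (simp only: restrict_upd_notin[OF tA])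
    also have "\<dots> = (\<integral>\<^sup>+y. ennreal (h t y (restrict x (pa R t))) \<partial>\<mu> t) * F (restrict x A)"
      by (rule nn_integral_multc) (use kernel_meas2[OF k z] in measurable)
    also have "\<dots> = F (restrict x A)" using kernel_int[OF k z] by simp
    finally show "kprod R h (S - {t}) x *
             (\<integral>\<^sup>+y. ennreal (h t y (restrict x (pa R t))) * F (restrict (x(t := y)) A) \<partial>\<mu> t) =
          kprod R h (S - {t}) x * F (restrict x A)" by simp
  qed
  also have "\<dots> = (\<integral>\<^sup>+x. kprod R h A x * F x \<partial>PiM A \<mu>)"
  proof (rule Suc.IH)
    show "card (S - {t} - A) = n" using Suc.prems(1) t
      by (metis Diff_insert Diff_insert2 card_Diff_singleton diff_Suc_1 finite)
    show "A \<subseteq> S - {t}" using Suc.prems(2) t by auto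
    show "pa R v \<subseteq> S - {t}" if "v \<in> S - {t}" for v
      using Suc.prems(3)[of v] sink[of v] that by auto
  qed
  finally show ?case .
qed

lemma marginal:
  fixes R :: "('n::finite \<times> 'n) set"
  assumes sf: "\<And>v. sigma_finite_measure (\<mu> v)"
    and k: "\<And>v. is_kernel R \<mu> v (h v)"
    and acyc: "acyclic R"
    and ancA: "\<And>v. v \<in> A \<Longrightarrow> pa R v \<subseteq> A"
    and F: "F \<in> borel_measurable (PiM A \<mu>)"
  shows "(\<integral>\<^sup>+x. kprod R h UNIV x * F (restrict x A) \<partial>PiM UNIV \<mu>) = (\<integral>\<^sup>+x. kprod R h A x * F x \<partial>PiM A \<mu>)"
  by (rule marginal_aux[OF assms refl]) auto

definition fprod :: "('n set \<times> (('n \<Rightarrow> 'v) \<Rightarrow> ennreal)) list \<Rightarrow> ('n \<Rightarrow> 'v) \<Rightarrow> ennreal" where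
  "fprod fs x = prod_list (map (\<lambda>(C, \<phi>). \<phi> (restrict x C)) fs)"

lemma fprod_simps[simp]:
  "fprod [] x = 1" "fprod ((C, \<phi>) # fs) x = \<phi> (restrict x C) * fprod fs x"
  by (simp_all add: fprod_def)

lemma fprod_filter: "fprod fs x = fprod (filter P fs) x * fprod (filter (\<lambda>p. \<not> P p) fs) x"
  by (induction fs) (auto simp: mult_ac)

lemma fprod_meas:
  "(\<And>C \<phi>. (C, \<phi>) \<in> set fs \<Longrightarrow> C \<subseteq> S \<and> \<phi> \<in> borel_measurable (PiM C \<mu>)) \<Longrightarrow>
     fprod fs \<in> borel_measurable (PiM S \<mu>)"
proof (induction fs)
  case Nil then show ?case by (simp add: fprod_def)
next
  case (Cons p fs)
  obtain C \<phi> where p: "p = (C, \<phi>)" by force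
  have "C \<subseteq> S" "\<phi> \<in> borel_measurable (PiM C \<mu>)" using Cons.prems p by auto
  then have "(\<lambda>x. \<phi> (restrict x C)) \<in> borel_measurable (PiM S \<mu>)"
    using measurable_comp[OF measurable_restrict_subset] by (auto simp: comp_def)
  moreover have "fprod fs \<in> borel_measurable (PiM S \<mu>)" using Cons by auto
  ultimately show ?case unfolding p fprod_simps by measurable
qed

lemma fprod_local:
  "(\<And>C \<phi>. (C, \<phi>) \<in> set fs \<Longrightarrow> C \<subseteq> T) \<Longrightarrow> (\<And>i. i \<in> T \<Longrightarrow> x i = x' i) \<Longrightarrow> fprod fs x = fprod fs x'"
proof (induction fs)
  case Nil then show ?case by simp
next
  case (Cons p fs)
  obtain C \<phi> where p: "p = (C, \<phi>)" by force
  have "C \<subseteq> T" using Cons.prems(1)[of C \<phi>] p by auto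
  then have "restrict x C = restrict x' C" using Cons.prems(2) by (intro restrict_ext) auto
  moreover have "fprod fs x = fprod fs x'" using Cons.IH Cons.prems by auto
  ultimately show ?case using p by simp
qed

lemma complete_sub: "complete_set R C \<Longrightarrow> D \<subseteq> C \<Longrightarrow> complete_set R D"
  unfolding complete_set_def by blast

lemma factor_kernels:
  fixes R :: "('n::finite \<times> 'n) set" and \<mu> :: "'n \<Rightarrow> 'v measure"
  assumes sf: "\<And>v. sigma_finite_measure (\<mu> v)"
    and acyc: "acyclic R"
    and pac: "\<And>v. complete_set R (pa R v)"
    and d: "\<And>v. is_kernel R \<mu> v (\<lambda>y z. d v y)"
  shows "card S = n \<Longrightarrow> (\<And>v. v \<in> S \<Longrightarrow> pa R v \<subseteq> S) \<Longrightarrow>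
    (\<And>C \<phi>. (C, \<phi>) \<in> set fs \<Longrightarrow> C \<subseteq> S \<and> complete_set R C \<and> \<phi> \<in> borel_measurable (PiM C \<mu>)) \<Longrightarrow>
    (\<integral>\<^sup>+x. fprod fs x \<partial>PiM S \<mu>) = 1 \<Longrightarrow>
    \<exists>h. (\<forall>v. is_kernel R \<mu> v (h v)) \<and>
      (\<forall>G \<in> borel_measurable (PiM S \<mu>).
         (\<integral>\<^sup>+x. fprod fs x * G x \<partial>PiM S \<mu>) = (\<integral>\<^sup>+x. kprod R h S x * G x \<partial>PiM S \<mu>))"
proof (induction n arbitrary: S fs)
  case 0
  then have S: "S = {}" by auto
  have C0: "C = {}" if "(C, \<phi>) \<in> set fs" for C \<phi> using 0(3)[OF that] S by auto
  have fx: "fprod fs x = fprod fs (\<lambda>_. undefined)" for x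
    by (rule fprod_local[where T = "{}"]) (auto dest: C0)
  have "(\<integral>\<^sup>+x. fprod fs x \<partial>PiM S \<mu>) = fprod fs (\<lambda>_. undefined)"
    unfolding S PiM_empty by (simp add: nn_integral_count_space_finite)
  then have f1: "fprod fs x = 1" for x using 0(4) fx by simp
  show ?case
  proof (intro exI[of _ "\<lambda>v y z. d v y"] conjI ballI allI)
    show "is_kernel R \<mu> v (\<lambda>y z. d v y)" for v by (rule d)
    show "(\<integral>\<^sup>+x. fprod fs x * G x \<partial>PiM S \<mu>) = (\<integral>\<^sup>+x. kprod R (\<lambda>v y z. d v y) S x * G x \<partial>PiM S \<mu>)" for G
      using f1 by (simp add: kprod_def S)
  qed
next
  case (Suc n)
  note anc = Suc.prems(2) and good = Suc.prems(3) and tot = Suc.prems(4)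
  interpret product_sigma_finite \<mu> by (simp add: product_sigma_finite_def sf)
  have "S \<noteq> {}" using Suc.prems(1) by auto
  from exists_sink[OF acyc this] obtain t where tS: "t \<in> S" and tmax: "\<And>c. c \<in> S \<Longrightarrow> (t, c) \<notin> R"
    by blast
  have sink: "\<And>v. v \<in> S \<Longrightarrow> t \<notin> pa R v" using tmax by (auto simp: pa_def)
  define P where "P = pa R t"
  have PS: "P \<subseteq> S - {t}" using anc[OF tS] sink[OF tS] by (auto simp: P_def)
  have tP: "t \<notin> P" using PS by auto
  define fsT where "fsT = filter (\<lambda>(C, \<phi>). t \<in> C) fs"
  define fsR where "fsR = filter (\<lambda>p. \<not> (\<lambda>(C, \<phi>). t \<in> C) p) fs"
  have fsplit: "fprod fs x = fprod fsT x * fprod fsR x" for x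
    unfolding fsT_def fsR_def by (rule fprod_filter)
  have T_sub: "C \<subseteq> insert t P" if "(C, \<phi>) \<in> set fsT" for C \<phi>
  proof
    fix c assume c: "c \<in> C"
    have CS: "C \<subseteq> S" "complete_set R C" "t \<in> C" using that good unfolding fsT_def by auto
    show "c \<in> insert t P"
    proof (cases "c = t")
      case False
      then have "joined R c t" using CS c unfolding complete_set_def by blast
      then show ?thesis using tmax[of c] CS c by (auto simp: joined_def P_def pa_def)
    qed simp
  qed
  have T_meas: "\<phi> \<in> borel_measurable (PiM C \<mu>)" if "(C, \<phi>) \<in> set fsT" for C \<phi>
    using that good unfolding fsT_def by auto
  have R_sub: "C \<subseteq> S - {t}" if "(C, \<phi>) \<in> set fsR" for C \<phi>
    using that good unfolding fsR_def by auto
  have R_good: "C \<subseteq> S - {t} \<and> complete_set R C \<and> \<phi> \<in> borel_measurable (PiM C \<mu>)"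
    if "(C, \<phi>) \<in> set fsR" for C \<phi>
    using that good R_sub[OF that] unfolding fsR_def by auto
  define a where "a = (\<lambda>y z. fprod fsT (z(t := y)))"
  have a_loc: "fprod fsT (x(t := y)) = a y (restrict x P)" for x y
    unfolding a_def by (rule fprod_local[OF T_sub]) (auto simp: restrict_def)
  have R_loc: "fprod fsR (x(t := y)) = fprod fsR x" for x y
    by (rule fprod_local[where T = "S - {t}"]) (auto dest: R_sub)
  have fT_meas: "fprod fsT \<in> borel_measurable (PiM (insert t P) \<mu>)"
    by (rule fprod_meas) (use T_sub T_meas in blast)
  have fR_meas: "fprod fsR \<in> borel_measurable (PiM (S - {t}) \<mu>)"
    by (rule fprod_meas) (use R_good in blast)
  have a_meas': "(\<lambda>(z, y). a y z) \<in> borel_measurable (PiM P \<mu> \<Otimes>\<^sub>M \<mu> t)"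
    using measurable_comp[OF measurable_add_dim[of t P \<mu>] fT_meas]
    unfolding a_def by (simp add: comp_def case_prod_beta)
  have a_meas: "(\<lambda>(y, z). a y z) \<in> borel_measurable (\<mu> t \<Otimes>\<^sub>M PiM P \<mu>)"
    using measurable_pair_swap[OF a_meas'] by (simp add: case_prod_beta)
  have a_meas1: "(\<lambda>y. a y z) \<in> borel_measurable (\<mu> t)" if "z \<in> space (PiM P \<mu>)" for z
    using measurable_Pair2[OF a_meas' that] by simp
  define m where "m = (\<lambda>z. \<integral>\<^sup>+y. a y z \<partial>\<mu> t)"
  have m_meas: "m \<in> borel_measurable (PiM P \<mu>)"
    unfolding m_def using a_meas' by (rule M.borel_measurable_nn_integral)
  have key: "(\<integral>\<^sup>+x. fprod fs x * G x \<partial>PiM S \<mu>) =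
     (\<integral>\<^sup>+x. fprod fsR x * (\<integral>\<^sup>+y. a y (restrict x P) * G (x(t := y)) \<partial>\<mu> t) \<partial>PiM (S - {t}) \<mu>)"
    if G: "G \<in> borel_measurable (PiM S \<mu>)" for G
  proof -
    have fm: "fprod fs \<in> borel_measurable (PiM S \<mu>)"
      by (rule fprod_meas) (use good in blast)
    have "(\<integral>\<^sup>+x. fprod fs x * G x \<partial>PiM S \<mu>) = (\<integral>\<^sup>+x. fprod fs x * G x \<partial>PiM (insert t (S - {t})) \<mu>)"
      by (simp only: insert_Diff[OF tS])
    also have "\<dots> = (\<integral>\<^sup>+x. (\<integral>\<^sup>+y. fprod fs (x(t := y)) * G (x(t := y)) \<partial>\<mu> t) \<partial>PiM (S - {t}) \<mu>)"
    proof -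
      have mm: "(\<lambda>x. fprod fs x * G x) \<in> borel_measurable (PiM (insert t (S - {t})) \<mu>)"
        unfolding insert_Diff[OF tS] using fm G by measurable
      show ?thesis by (rule product_nn_integral_insert[OF _ _ mm]) auto
    qed
    also have "\<dots> = (\<integral>\<^sup>+x. fprod fsR x * (\<integral>\<^sup>+y. a y (restrict x P) * G (x(t := y)) \<partial>\<mu> t) \<partial>PiM (S - {t}) \<mu>)"
    proof (rule nn_integral_cong)
      fix x assume x: "x \<in> space (PiM (S - {t}) \<mu>)"
      have z: "restrict x P \<in> space (PiM P \<mu>)" using x PS by (auto simp: space_PiM PiE_iff)
      have upd: "(\<lambda>y. x(t := y)) \<in> measurable (\<mu> t) (PiM S \<mu>)"
        using measurable_component_update[OF x, of t] unfolding insert_Diff[OF tS] by simp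
      have mm: "(\<lambda>y. a y (restrict x P) * G (x(t := y))) \<in> borel_measurable (\<mu> t)"
        using a_meas1[OF z] measurable_comp[OF upd G] by (simp add: comp_def)
      have eq: "fprod fs (x(t := y)) * G (x(t := y)) = fprod fsR x * (a y (restrict x P) * G (x(t := y)))" for y
        unfolding fsplit a_loc R_loc by (simp only: mult.assoc mult.commute mult.left_commute)
      show "(\<integral>\<^sup>+y. fprod fs (x(t := y)) * G (x(t := y)) \<partial>\<mu> t) =
          fprod fsR x * (\<integral>\<^sup>+y. a y (restrict x P) * G (x(t := y)) \<partial>\<mu> t)"
        by (simp only: eq) (rule nn_integral_cmult[OF mm])
    qed
    finally show ?thesis .
  qed
  have tot': "(\<integral>\<^sup>+x. fprod ((P, m) # fsR) x \<partial>PiM (S - {t}) \<mu>) = 1"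
  proof -
    have "1 = (\<integral>\<^sup>+x. fprod fs x * 1 \<partial>PiM S \<mu>)" using tot by simp
    also have "\<dots> = (\<integral>\<^sup>+x. fprod fsR x * m (restrict x P) \<partial>PiM (S - {t}) \<mu>)"
      by (subst key) (auto simp: m_def)
    finally show ?thesis by (simp add: mult.commute)
  qed
  obtain h where hk: "\<And>v. is_kernel R \<mu> v (h v)"
    and hG: "\<And>G. G \<in> borel_measurable (PiM (S - {t}) \<mu>) \<Longrightarrow>
         (\<integral>\<^sup>+x. fprod ((P, m) # fsR) x * G x \<partial>PiM (S - {t}) \<mu>) = (\<integral>\<^sup>+x. kprod R h (S - {t}) x * G x \<partial>PiM (S - {t}) \<mu>)"
  proof -
    have "\<exists>h. (\<forall>v. is_kernel R \<mu> v (h v)) \<and>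
      (\<forall>G \<in> borel_measurable (PiM (S - {t}) \<mu>).
         (\<integral>\<^sup>+x. fprod ((P, m) # fsR) x * G x \<partial>PiM (S - {t}) \<mu>) = (\<integral>\<^sup>+x. kprod R h (S - {t}) x * G x \<partial>PiM (S - {t}) \<mu>))"
    proof (rule Suc.IH)
      show "card (S - {t}) = n" using Suc.prems(1) tS by simp
      show "pa R v \<subseteq> S - {t}" if "v \<in> S - {t}" for v using anc[of v] sink[of v] that by auto
      show "C \<subseteq> S - {t} \<and> complete_set R C \<and> \<phi> \<in> borel_measurable (PiM C \<mu>)"
        if "(C, \<phi>) \<in> set ((P, m) # fsR)" for C \<phi>
        using that R_good PS pac[of t] m_meas by (auto simp: P_def)
      show "(\<integral>\<^sup>+x. fprod ((P, m) # fsR) x \<partial>PiM (S - {t}) \<mu>) = 1" by (rule tot')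
    qed
    then show ?thesis using that by blast
  qed
  define ht where "ht = (\<lambda>y z. if m z \<noteq> 0 \<and> m z \<noteq> \<top> then enn2real (a y z / m z) else d t y)"
  define h' where "h' = h(t := ht)"
  have ht_int: "(\<integral>\<^sup>+y. ennreal (ht y z) * g y \<partial>\<mu> t) = (\<integral>\<^sup>+y. a y z * g y \<partial>\<mu> t) / m z"
    if z: "z \<in> space (PiM P \<mu>)" and mz: "m z \<noteq> 0" "m z \<noteq> \<top>" and g: "g \<in> borel_measurable (\<mu> t)" for z g
  proof -
    have "AE y in \<mu> t. a y z \<noteq> \<top>"
      using nn_integral_PInf_AE[OF a_meas1[OF z]] mz by (simp add: m_def)
    then have "AE y in \<mu> t. ennreal (ht y z) * g y = a y z * g y / m z"
    proof (rule AE_mp, intro AE_I2 impI)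
      fix y assume "a y z \<noteq> \<top>"
      then have "a y z / m z \<noteq> \<top>" using mz by (simp add: ennreal_divide_eq_top_iff)
      then have "ennreal (enn2real (a y z / m z)) = a y z / m z"
        by (simp add: ennreal_enn2real_if)
      then show "ennreal (ht y z) * g y = a y z * g y / m z"
        using mz unfolding ht_def by (simp add: ennreal_times_divide mult.commute)
    qed
    then have "(\<integral>\<^sup>+y. ennreal (ht y z) * g y \<partial>\<mu> t) = (\<integral>\<^sup>+y. a y z * g y / m z \<partial>\<mu> t)"
      by (rule nn_integral_cong_AE)
    also have "\<dots> = (\<integral>\<^sup>+y. a y z * g y \<partial>\<mu> t) / m z"
      by (rule nn_integral_divide) (use a_meas1[OF z] g in measurable)
    finally show ?thesis .
  qed
  have ht_meas: "(\<lambda>(y, z). ht y z) \<in> borel_measurable (\<mu> t \<Otimes>\<^sub>M PiM P \<mu>)"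
  proof -
    have [measurable]: "(\<lambda>p. a (fst p) (snd p)) \<in> borel_measurable (\<mu> t \<Otimes>\<^sub>M PiM P \<mu>)"
      using a_meas by (simp add: case_prod_beta)
    have [measurable]: "(\<lambda>p. m (snd p)) \<in> borel_measurable (\<mu> t \<Otimes>\<^sub>M PiM P \<mu>)"
      using measurable_comp[OF measurable_snd m_meas] by (simp add: comp_def)
    have [measurable]: "(\<lambda>p. d t (fst p)) \<in> borel_measurable (\<mu> t \<Otimes>\<^sub>M PiM P \<mu>)"
    proof -
      have e: "(\<lambda>(y, z). d t y) = (\<lambda>p. d t (fst p))" by auto
      have "(\<lambda>(y, z). d t y) \<in> borel_measurable (\<mu> t \<Otimes>\<^sub>M PiM (pa R t) \<mu>)"
        using d[of t] unfolding is_kernel_def by blast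
      then show ?thesis unfolding e P_def .
    qed
    have "(\<lambda>p. if m (snd p) \<noteq> 0 \<and> m (snd p) \<noteq> \<top> then enn2real (a (fst p) (snd p) / m (snd p)) else d t (fst p))
        \<in> borel_measurable (\<mu> t \<Otimes>\<^sub>M PiM P \<mu>)" by measurable
    moreover have "(\<lambda>(y, z). ht y z) = (\<lambda>p. if m (snd p) \<noteq> 0 \<and> m (snd p) \<noteq> \<top> then enn2real (a (fst p) (snd p) / m (snd p)) else d t (fst p))"
      by (auto simp: ht_def fun_eq_iff)
    ultimately show ?thesis by simp
  qed
  have ht_kernel: "is_kernel R \<mu> t ht"
    unfolding is_kernel_def
  proof (intro conjI allI ballI)
    show "0 \<le> ht y z" for y z
      unfolding ht_def using kernel_nonneg[OF d] by auto
    show "(\<lambda>(y, z). ht y z) \<in> borel_measurable (\<mu> t \<Otimes>\<^sub>M PiM (pa R t) \<mu>)"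
      using ht_meas by (simp add: P_def)
    fix z assume z: "z \<in> space (PiM (pa R t) \<mu>)"
    then have z': "z \<in> space (PiM P \<mu>)" by (simp add: P_def)
    show "(\<integral>\<^sup>+y. ennreal (ht y z) \<partial>\<mu> t) = 1"
    proof (cases "m z \<noteq> 0 \<and> m z \<noteq> \<top>")
      case True
      have "(\<integral>\<^sup>+y. ennreal (ht y z) * 1 \<partial>\<mu> t) = (\<integral>\<^sup>+y. a y z * 1 \<partial>\<mu> t) / m z"
        using True by (intro ht_int[OF z']) auto
      moreover have "(\<integral>\<^sup>+y. a y z \<partial>\<mu> t) = m z" by (simp add: m_def)
      ultimately show ?thesis using True by (simp add: top.not_eq_extremum)
    next
      case False
      then have "ht y z = d t y" for y unfolding ht_def by auto
      then show ?thesis using kernel_int[OF d z] by simp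
    qed
  qed
  have h'k: "\<And>v. is_kernel R \<mu> v (h' v)"
    using hk ht_kernel by (simp add: h'_def)
  show ?case
  proof (intro exI[of _ h'] conjI allI ballI)
    show "is_kernel R \<mu> v (h' v)" for v by (rule h'k)
    fix G :: "('n \<Rightarrow> 'v) \<Rightarrow> ennreal" assume G: "G \<in> borel_measurable (PiM S \<mu>)"
    define \<Gamma> where "\<Gamma> = (\<lambda>x. \<integral>\<^sup>+y. ennreal (ht y (restrict x P)) * G (x(t := y)) \<partial>\<mu> t)"
    define \<Lambda> where "\<Lambda> = (\<lambda>x. \<integral>\<^sup>+y. a y (restrict x P) * G (x(t := y)) \<partial>\<mu> t)"
    have \<Gamma>_meas: "\<Gamma> \<in> borel_measurable (PiM (S - {t}) \<mu>)"
    proof -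
      have r: "(\<lambda>p. (snd p, restrict (fst p) P)) \<in> measurable (PiM (S - {t}) \<mu> \<Otimes>\<^sub>M \<mu> t) (\<mu> t \<Otimes>\<^sub>M PiM P \<mu>)"
        by (intro measurable_Pair measurable_snd measurable_compose[OF measurable_fst measurable_restrict_subset[OF PS]])
      have h1: "(\<lambda>(x, y). ht y (restrict x P)) \<in> borel_measurable (PiM (S - {t}) \<mu> \<Otimes>\<^sub>M \<mu> t)"
        using measurable_comp[OF r ht_meas] by (simp add: comp_def case_prod_beta)
      have g1: "(\<lambda>(x, y). G (x(t := y))) \<in> borel_measurable (PiM (S - {t}) \<mu> \<Otimes>\<^sub>M \<mu> t)"
        using measurable_comp[OF measurable_add_dim[of t "S - {t}" \<mu>], of G borel] G
        unfolding insert_Diff[OF tS] by (simp add: comp_def case_prod_beta)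
      have "(\<lambda>(x, y). ennreal (ht y (restrict x P)) * G (x(t := y))) \<in> borel_measurable (PiM (S - {t}) \<mu> \<Otimes>\<^sub>M \<mu> t)"
        using h1 g1 by (simp add: case_prod_beta)
      then show ?thesis unfolding \<Gamma>_def by (rule M.borel_measurable_nn_integral)
    qed
    have kp: "kprod R h' (S - {t}) x = kprod R h (S - {t}) x" for x
      unfolding kprod_def h'_def by (intro prod.cong) auto
    have "(\<integral>\<^sup>+x. kprod R h' S x * G x \<partial>PiM S \<mu>) =
        (\<integral>\<^sup>+x. kprod R h' (S - {t}) x * \<Gamma> x \<partial>PiM (S - {t}) \<mu>)"
    proof -
      have "h' t = ht" by (simp add: h'_def)
      then show ?thesis unfolding \<Gamma>_def P_def using sink_removal[OF sf h'k anc tS sink G] by simp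
    qed
    also have "\<dots> = (\<integral>\<^sup>+x. fprod ((P, m) # fsR) x * \<Gamma> x \<partial>PiM (S - {t}) \<mu>)"
      unfolding kp by (rule hG[OF \<Gamma>_meas, symmetric])
    also have "\<dots> = (\<integral>\<^sup>+x. fprod fsR x * \<Lambda> x \<partial>PiM (S - {t}) \<mu>)"
    proof (rule nn_integral_cong_AE)
      have fm': "fprod ((P, m) # fsR) \<in> borel_measurable (PiM (S - {t}) \<mu>)"
        by (rule fprod_meas) (use R_good PS m_meas in auto)
      have "AE x in PiM (S - {t}) \<mu>. fprod ((P, m) # fsR) x \<noteq> \<infinity>"
        by (rule nn_integral_PInf_AE[OF fm']) (simp add: tot')
      then have "AE x in PiM (S - {t}) \<mu>. fprod ((P, m) # fsR) x \<noteq> \<top>" by simp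
      then show "AE x in PiM (S - {t}) \<mu>. fprod ((P, m) # fsR) x * \<Gamma> x = fprod fsR x * \<Lambda> x"
      proof (rule AE_mp, intro AE_I2 impI)
        fix x assume x: "x \<in> space (PiM (S - {t}) \<mu>)" and fin: "fprod ((P, m) # fsR) x \<noteq> \<top>"
        define z where "z = restrict x P"
        have z: "z \<in> space (PiM P \<mu>)" using x PS by (auto simp: space_PiM PiE_iff z_def)
        have upd: "(\<lambda>y. x(t := y)) \<in> measurable (\<mu> t) (PiM S \<mu>)"
          using measurable_component_update[OF x, of t] unfolding insert_Diff[OF tS] by simp
        have Gm: "(\<lambda>y. G (x(t := y))) \<in> borel_measurable (\<mu> t)"
          using measurable_comp[OF upd G] by (simp add: comp_def)
        have fin': "m z * fprod fsR x \<noteq> \<top>" using fin by (simp add: z_def)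
        show "fprod ((P, m) # fsR) x * \<Gamma> x = fprod fsR x * \<Lambda> x"
        proof (cases "m z = 0")
          case True
          then have "AE y in \<mu> t. a y z = 0"
            using nn_integral_0_iff_AE[OF a_meas1[OF z]] by (simp add: m_def)
          then have "\<Lambda> x = 0" unfolding \<Lambda>_def z_def[symmetric]
            by (subst nn_integral_0_iff_AE) (use a_meas1[OF z] Gm in \<open>auto elim!: AE_mp\<close>)
          then show ?thesis using True by (simp add: z_def)
        next
          case m0: False
          show ?thesis
          proof (cases "m z = \<top>")
            case True
            then have "fprod fsR x = 0" using fin' by (auto simp: ennreal_mult_eq_top_iff)
            then show ?thesis by simp
          next
            case False
            have "\<Gamma> x = \<Lambda> x / m z"
              unfolding \<Gamma>_def \<Lambda>_def z_def[symmetric] by (rule ht_int[OF z m0 False Gm])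
            then have "m z * \<Gamma> x = \<Lambda> x"
              using m0 False by (simp add: ennreal_times_divide mult.commute ennreal_mult_divide_eq)
            then have "fprod fsR x * (m z * \<Gamma> x) = fprod fsR x * \<Lambda> x" by simp
            then show ?thesis by (simp add: z_def mult_ac)
          qed
        qed
      qed
    qed
    also have "\<dots> = (\<integral>\<^sup>+x. fprod fs x * G x \<partial>PiM S \<mu>)"
      unfolding \<Lambda>_def by (rule key[OF G, symmetric])
    finally show "(\<integral>\<^sup>+x. fprod fs x * G x \<partial>PiM S \<mu>) = (\<integral>\<^sup>+x. kprod R h' S x * G x \<partial>PiM S \<mu>)" ..
  qed
qed

lemma pa_converse: "pa (converse E) v = ch E v"
  by (auto simp: pa_def ch_def)

lemma ch_converse: "ch (converse E) v = pa E v"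
  by (auto simp: pa_def ch_def)

lemma complete_converse: "complete_set (converse E) C = complete_set E C"
  by (auto simp: complete_set_def joined_def)

lemma restrict_restrict_sub: "D \<subseteq> C \<Longrightarrow> restrict (restrict x C) D = restrict x D"
  by (auto simp: restrict_def fun_eq_iff)

lemma default_kernels:
  assumes ss: "\<And>s. state_space (\<mu> s)"
  obtains U0 U1 where "\<And>v. U0 v \<in> sets (\<mu> v)" "\<And>v. U1 v \<in> sets (\<mu> v)" "\<And>v. U0 v \<inter> U1 v = {}"
    "\<And>v. emeasure (\<mu> v) (U0 v) = 1" "\<And>v. emeasure (\<mu> v) (U1 v) = 1"
proof -
  have "\<forall>v. \<exists>U. fst U \<in> sets (\<mu> v) \<and> snd U \<in> sets (\<mu> v) \<and> fst U \<inter> snd U = {} \<and>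
            emeasure (\<mu> v) (fst U) = 1 \<and> emeasure (\<mu> v) (snd U) = 1"
    using ss_two_sets[OF ss] by fastforce
  then obtain U where "\<And>v. fst (U v) \<in> sets (\<mu> v) \<and> snd (U v) \<in> sets (\<mu> v) \<and> fst (U v) \<inter> snd (U v) = {} \<and>
            emeasure (\<mu> v) (fst (U v)) = 1 \<and> emeasure (\<mu> v) (snd (U v)) = 1"
    by metis
  then show ?thesis using that[of "\<lambda>v. fst (U v)" "\<lambda>v. snd (U v)"] by blast
qed

lemma indicator_kernel:
  assumes "U \<in> sets (\<mu> v)" "emeasure (\<mu> v) U = 1"
  shows "is_kernel R \<mu> v (\<lambda>y z. indicator U y)"
  unfolding is_kernel_def
proof (intro conjI allI ballI)
  show "0 \<le> (indicator U y :: real)" for y by simp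
  have "(\<lambda>p. indicator U (fst p) :: real) \<in> borel_measurable (\<mu> v \<Otimes>\<^sub>M PiM (pa R v) \<mu>)"
    using assms(1) by measurable
  moreover have "(\<lambda>(y, z). indicator U y :: real) = (\<lambda>p. indicator U (fst p))" by auto
  ultimately show "(\<lambda>(y, z). indicator U y :: real) \<in> borel_measurable (\<mu> v \<Otimes>\<^sub>M PiM (pa R v) \<mu>)" by simp
  show "(\<integral>\<^sup>+y. ennreal (indicator U y) \<partial>\<mu> v) = 1" for z
    using assms by (simp add: ennreal_indicator)
qed

lemma if_dir:
  fixes E :: "('n::finite \<times> 'n) set" and \<mu> :: "'n \<Rightarrow> (nat \<Rightarrow> real) measure"
  assumes acyc: "acyclic E"
    and ss: "\<And>s. state_space (\<mu> s)"
    and comp: "\<forall>s. complete_set E (pa E s) \<and> complete_set E (ch E s)"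
  shows "model E \<mu> \<subseteq> model (converse E) \<mu>"
proof
  fix Pm assume "Pm \<in> model E \<mu>"
  then obtain k where Pprob: "prob_space Pm" and kk: "\<And>s. is_kernel E \<mu> s (k s)"
    and Pdef: "Pm = density (joint_measure \<mu>) (\<lambda>x. ennreal (\<Prod>s\<in>UNIV. k s (x s) (restrict x (pa E s))))"
    unfolding model_def by blast
  define R where "R = converse E"
  have sf: "\<And>v. sigma_finite_measure (\<mu> v)" using ss_sigma_finite[OF ss] .
  have acR: "acyclic R" using acyc by (simp add: R_def acyclic_converse)
  have pac: "\<And>v. complete_set R (pa R v)" using comp by (simp add: R_def pa_converse complete_converse)
  obtain U0 U1 where U: "\<And>v. U0 v \<in> sets (\<mu> v)" "\<And>v. U1 v \<in> sets (\<mu> v)" "\<And>v. U0 v \<inter> U1 v = {}"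
    "\<And>v. emeasure (\<mu> v) (U0 v) = 1" "\<And>v. emeasure (\<mu> v) (U1 v) = 1"
    by (rule default_kernels[of \<mu>, OF ss]) blast
  have dk: "is_kernel R \<mu> v (\<lambda>y z. indicator (U0 v) y)" for v
    using indicator_kernel[of "U0 v" \<mu> v R] U(1)[of v] U(4)[of v] by simp
  obtain xs where xs: "set xs = (UNIV :: 'n set)" "distinct xs"
    using finite_distinct_list[of "UNIV :: 'n set"] by auto
  define fs where "fs = map (\<lambda>s. (insert s (pa E s), \<lambda>w. ennreal (k s (w s) (restrict w (pa E s))))) xs"
  define f where "f = (\<lambda>x. ennreal (\<Prod>s\<in>UNIV. k s (x s) (restrict x (pa E s))))"
  have fprod_eq: "fprod fs x = f x" for x
  proof -
    have "fprod fs x = (\<Prod>s\<leftarrow>xs. ennreal (k s (restrict x (insert s (pa E s)) s)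
             (restrict (restrict x (insert s (pa E s))) (pa E s))))"
      unfolding fprod_def fs_def by (simp add: comp_def)
    also have "\<dots> = (\<Prod>s\<in>UNIV. ennreal (k s (restrict x (insert s (pa E s)) s)
             (restrict (restrict x (insert s (pa E s))) (pa E s))))"
      by (subst prod.distinct_set_conv_list[OF xs(2), symmetric]) (simp add: xs(1))
    also have "\<dots> = (\<Prod>s\<in>UNIV. ennreal (k s (x s) (restrict x (pa E s))))"
      by (intro prod.cong refl) (simp add: Int_absorb1 subset_insertI)
    also have "\<dots> = f x" unfolding f_def
      by (rule prod_ennreal) (use kernel_nonneg[OF kk] in auto)
    finally show ?thesis .
  qed
  have f_meas: "f \<in> borel_measurable (PiM UNIV \<mu>)"
    unfolding f_def
    by (intro measurable_compose[OF _ measurable_ennreal] borel_measurable_prod kernel_meas[OF kk]) auto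
  have good: "C \<subseteq> UNIV \<and> complete_set R C \<and> \<phi> \<in> borel_measurable (PiM C \<mu>)" if mem: "(C, \<phi>) \<in> set fs" for C \<phi>
  proof -
    obtain s where s: "C = insert s (pa E s)" "\<phi> = (\<lambda>w. ennreal (k s (w s) (restrict w (pa E s))))"
      using mem unfolding fs_def by auto
    have "complete_set E C"
      using comp unfolding s(1) complete_set_def by (auto simp: joined_def pa_def)
    moreover have "\<phi> \<in> borel_measurable (PiM C \<mu>)"
      unfolding s by (intro measurable_compose[OF _ measurable_ennreal] kernel_meas[OF kk]) auto
    ultimately show ?thesis by (simp add: R_def complete_converse)
  qed
  have tot: "(\<integral>\<^sup>+x. fprod fs x \<partial>PiM UNIV \<mu>) = 1"
  proof -
    have "emeasure Pm (space Pm) = 1" using Pprob by (simp add: prob_space.emeasure_space_1)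
    moreover have "emeasure Pm (space Pm) = (\<integral>\<^sup>+x. f x \<partial>PiM UNIV \<mu>)"
      unfolding Pdef joint_measure_def f_def[symmetric]
      by (subst emeasure_density) (auto intro!: nn_integral_cong simp: f_meas)
    ultimately show ?thesis by (simp add: fprod_eq)
  qed
  obtain h where hk: "\<forall>v. is_kernel R \<mu> v (h v)"
    and hG: "\<forall>G \<in> borel_measurable (PiM UNIV \<mu>).
         (\<integral>\<^sup>+x. fprod fs x * G x \<partial>PiM UNIV \<mu>) = (\<integral>\<^sup>+x. kprod R h UNIV x * G x \<partial>PiM UNIV \<mu>)"
    using factor_kernels[OF sf acR pac dk refl, where fs = fs and S = UNIV] good tot by auto
  define g where "g = (\<lambda>x. ennreal (\<Prod>s\<in>UNIV. h s (x s) (restrict x (pa R s))))"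
  have kg: "kprod R h UNIV x = g x" for x
    unfolding kprod_def g_def by (rule prod_ennreal) (use kernel_nonneg hk in metis)
  have g_meas: "g \<in> borel_measurable (PiM UNIV \<mu>)"
    unfolding g_def using hk
    by (intro measurable_compose[OF _ measurable_ennreal] borel_measurable_prod kernel_meas) auto
  have "Pm = density (joint_measure \<mu>) g"
    unfolding Pdef f_def[symmetric] joint_measure_def
  proof (rule measure_eqI)
    show "sets (density (PiM UNIV \<mu>) f) = sets (density (PiM UNIV \<mu>) g)" by simp
    fix A assume "A \<in> sets (density (PiM UNIV \<mu>) f)"
    then have A: "A \<in> sets (PiM UNIV \<mu>)" by simp
    have "emeasure (density (PiM UNIV \<mu>) f) A = (\<integral>\<^sup>+x. f x * indicator A x \<partial>PiM UNIV \<mu>)"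
      using A f_meas by (simp add: emeasure_density)
    also have "\<dots> = (\<integral>\<^sup>+x. g x * indicator A x \<partial>PiM UNIV \<mu>)"
      using hG A by (simp add: fprod_eq kg)
    also have "\<dots> = emeasure (density (PiM UNIV \<mu>) g) A"
      using A g_meas by (simp add: emeasure_density)
    finally show "emeasure (density (PiM UNIV \<mu>) f) A = emeasure (density (PiM UNIV \<mu>) g) A" .
  qed
  then show "Pm \<in> model (converse E) \<mu>"
    unfolding model_def g_def R_def[symmetric] using Pprob hk by blast
qed

lemma Q_identity:
  fixes R :: "('n::finite \<times> 'n) set"
  assumes sf: "\<And>v. sigma_finite_measure (\<mu> v)"
    and k: "\<And>v. is_kernel R \<mu> v (h v)"
    and acyc: "acyclic R"
    and ancA: "\<And>v. v \<in> A \<Longrightarrow> pa R v \<subseteq> A"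
    and aA: "a \<in> A" and bA: "b \<in> A" and ab: "a \<noteq> b" and aZ: "a \<notin> pa R b"
    and bsink: "\<And>c. c \<in> A \<Longrightarrow> (b, c) \<notin> R"
    and T: "T \<in> sets (\<mu> a)" and Sb: "Sb \<in> sets (\<mu> b)"
    and \<psi>: "\<psi> \<in> borel_measurable (PiM (pa R b) \<mu>)"
  shows "(\<integral>\<^sup>+x. kprod R h UNIV x * (indicator T (x a) * indicator Sb (x b) * \<psi> (restrict x (pa R b))) \<partial>PiM UNIV \<mu>) =
         (\<integral>\<^sup>+x. kprod R h UNIV x * (indicator T (x a) *
              (\<psi> (restrict x (pa R b)) * (\<integral>\<^sup>+y. indicator Sb y * ennreal (h b y (restrict x (pa R b))) \<partial>\<mu> b))) \<partial>PiM UNIV \<mu>)"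
proof -
  define Z where "Z = pa R b"
  have ZA: "Z \<subseteq> A" using ancA[OF bA] by (simp add: Z_def)
  have bZ: "b \<notin> Z" using bsink[OF bA] by (auto simp: Z_def pa_def)
  have sink: "\<And>v. v \<in> A \<Longrightarrow> b \<notin> pa R v" using bsink by (auto simp: pa_def)
  define \<Phi> where "\<Phi> = (\<lambda>z. \<psi> z * (\<integral>\<^sup>+y. indicator Sb y * ennreal (h b y z) \<partial>\<mu> b))"
  have hb_meas: "(\<lambda>(z, y). indicator Sb y * ennreal (h b y z)) \<in> borel_measurable (PiM Z \<mu> \<Otimes>\<^sub>M \<mu> b)"
  proof -
    have "(\<lambda>(y, z). h b y z) \<in> borel_measurable (\<mu> b \<Otimes>\<^sub>M PiM Z \<mu>)"
      using k[of b] unfolding is_kernel_def Z_def by blast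
    from measurable_pair_swap[OF this] have "(\<lambda>p. h b (snd p) (fst p)) \<in> borel_measurable (PiM Z \<mu> \<Otimes>\<^sub>M \<mu> b)"
      by (simp add: case_prod_beta)
    then have "(\<lambda>p. indicator Sb (snd p) * ennreal (h b (snd p) (fst p))) \<in> borel_measurable (PiM Z \<mu> \<Otimes>\<^sub>M \<mu> b)"
      using Sb by measurable
    then show ?thesis by (simp add: case_prod_beta)
  qed
  have \<Phi>_meas: "\<Phi> \<in> borel_measurable (PiM Z \<mu>)"
  proof -
    interpret sb: sigma_finite_measure "\<mu> b" by (rule sf)
    have "(\<lambda>z. \<integral>\<^sup>+y. indicator Sb y * ennreal (h b y z) \<partial>\<mu> b) \<in> borel_measurable (PiM Z \<mu>)"
      using hb_meas by (rule sb.borel_measurable_nn_integral)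
    then show ?thesis unfolding \<Phi>_def using \<psi> by (simp add: Z_def)
  qed
  define F1 where "F1 = (\<lambda>x. indicator T (x a) * indicator Sb (x b) * \<psi> (restrict x Z) :: ennreal)"
  define F2 where "F2 = (\<lambda>x. indicator T (x a) * \<Phi> (restrict x Z) :: ennreal)"
  have F1m: "F1 \<in> borel_measurable (PiM A \<mu>)"
  proof -
    have "(\<lambda>x. \<psi> (restrict x Z)) \<in> borel_measurable (PiM A \<mu>)"
      using measurable_comp[OF measurable_restrict_subset[OF ZA] \<psi>[folded Z_def]] by (simp add: comp_def)
    then show ?thesis unfolding F1_def using T Sb aA bA by measurable
  qed
  have F2m: "F2 \<in> borel_measurable (PiM A \<mu>)"
  proof -
    have "(\<lambda>x. \<Phi> (restrict x Z)) \<in> borel_measurable (PiM A \<mu>)"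
      using measurable_comp[OF measurable_restrict_subset[OF ZA] \<Phi>_meas] by (simp add: comp_def)
    then show ?thesis unfolding F2_def using T aA by measurable
  qed
  have r1: "indicator T (x a) * indicator Sb (x b) * \<psi> (restrict x (pa R b)) = F1 (restrict x A)" for x
    using aA bA ZA by (simp add: F1_def Z_def[symmetric] restrict_restrict Int_absorb1)
  have r2: "indicator T (x a) * (\<psi> (restrict x (pa R b)) * (\<integral>\<^sup>+y. indicator Sb y * ennreal (h b y (restrict x (pa R b))) \<partial>\<mu> b))
      = F2 (restrict x A)" for x
    using aA ZA by (simp add: F2_def \<Phi>_def Z_def[symmetric] restrict_restrict Int_absorb1)
  have "(\<integral>\<^sup>+x. kprod R h UNIV x * F1 (restrict x A) \<partial>PiM UNIV \<mu>) = (\<integral>\<^sup>+x. kprod R h A x * F1 x \<partial>PiM A \<mu>)"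
    by (rule marginal[OF sf k acyc ancA F1m])
  also have "\<dots> = (\<integral>\<^sup>+x. kprod R h (A - {b}) x *
       (\<integral>\<^sup>+y. ennreal (h b y (restrict x (pa R b))) * F1 (x(b := y)) \<partial>\<mu> b) \<partial>PiM (A - {b}) \<mu>)"
    by (rule sink_removal[OF sf k ancA bA sink F1m])
  also have "\<dots> = (\<integral>\<^sup>+x. kprod R h (A - {b}) x *
       (\<integral>\<^sup>+y. ennreal (h b y (restrict x (pa R b))) * F2 (x(b := y)) \<partial>\<mu> b) \<partial>PiM (A - {b}) \<mu>)"
  proof (rule nn_integral_cong)
    fix x assume x: "x \<in> space (PiM (A - {b}) \<mu>)"
    have z: "restrict x Z \<in> space (PiM Z \<mu>)" using x ZA bZ by (auto simp: space_PiM PiE_iff)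
    have hm: "(\<lambda>y. ennreal (h b y (restrict x Z))) \<in> borel_measurable (\<mu> b)"
      using kernel_meas2[OF k, where v=b and z="restrict x Z"] z by (simp add: Z_def)
    have ru: "restrict (x(b := y)) Z = restrict x Z" for y using bZ by (rule restrict_upd_notin)
    have e1: "ennreal (h b y (restrict x Z)) * F1 (x(b := y)) =
        (indicator T (x a) * \<psi> (restrict x Z)) * (indicator Sb y * ennreal (h b y (restrict x Z)))" for y
      unfolding F1_def ru using ab by (simp add: mult_ac)
    have e2: "ennreal (h b y (restrict x Z)) * F2 (x(b := y)) = F2 x * ennreal (h b y (restrict x Z))" for y
      unfolding F2_def ru using ab by (simp add: mult_ac)
    have "(\<integral>\<^sup>+y. ennreal (h b y (restrict x Z)) * F1 (x(b := y)) \<partial>\<mu> b) =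
          (indicator T (x a) * \<psi> (restrict x Z)) * (\<integral>\<^sup>+y. indicator Sb y * ennreal (h b y (restrict x Z)) \<partial>\<mu> b)"
      unfolding e1 by (rule nn_integral_cmult) (use hm Sb in measurable)
    also have "\<dots> = F2 x" by (simp add: F2_def \<Phi>_def mult_ac)
    also have "\<dots> = F2 x * (\<integral>\<^sup>+y. ennreal (h b y (restrict x Z)) \<partial>\<mu> b)"
      using kernel_int[OF k, where v=b and z="restrict x Z"] z by (simp add: Z_def)
    also have "\<dots> = (\<integral>\<^sup>+y. ennreal (h b y (restrict x Z)) * F2 (x(b := y)) \<partial>\<mu> b)"
      unfolding e2 by (rule nn_integral_cmult[symmetric]) (use hm in measurable)
    finally show "kprod R h (A - {b}) x * (\<integral>\<^sup>+y. ennreal (h b y (restrict x (pa R b))) * F1 (x(b := y)) \<partial>\<mu> b) =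
        kprod R h (A - {b}) x * (\<integral>\<^sup>+y. ennreal (h b y (restrict x (pa R b))) * F2 (x(b := y)) \<partial>\<mu> b)"
      by (simp add: Z_def)
  qed
  also have "\<dots> = (\<integral>\<^sup>+x. kprod R h A x * F2 x \<partial>PiM A \<mu>)"
    by (rule sink_removal[OF sf k ancA bA sink F2m, symmetric])
  also have "\<dots> = (\<integral>\<^sup>+x. kprod R h UNIV x * F2 (restrict x A) \<partial>PiM UNIV \<mu>)"
    by (rule marginal[OF sf k acyc ancA F2m, symmetric])
  finally show ?thesis by (simp only: r1 r2)
qed

lemma Phi_meas:
  assumes sf: "\<And>v. sigma_finite_measure (\<mu> v)" and k: "is_kernel R \<mu> b hb"
    and Sb: "Sb \<in> sets (\<mu> b)" and \<psi>: "\<psi> \<in> borel_measurable (PiM (pa R b) \<mu>)"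
  shows "(\<lambda>z. \<psi> z * (\<integral>\<^sup>+y. indicator Sb y * ennreal (hb y z) \<partial>\<mu> b)) \<in> borel_measurable (PiM (pa R b) \<mu>)"
proof -
  have "(\<lambda>(y, z). hb y z) \<in> borel_measurable (\<mu> b \<Otimes>\<^sub>M PiM (pa R b) \<mu>)"
    using k unfolding is_kernel_def by blast
  from measurable_pair_swap[OF this] have "(\<lambda>p. hb (snd p) (fst p)) \<in> borel_measurable (PiM (pa R b) \<mu> \<Otimes>\<^sub>M \<mu> b)"
    by (simp add: case_prod_beta)
  then have "(\<lambda>p. indicator Sb (snd p) * ennreal (hb (snd p) (fst p))) \<in> borel_measurable (PiM (pa R b) \<mu> \<Otimes>\<^sub>M \<mu> b)"
    using Sb by measurable
  then have hb_meas: "(\<lambda>(z, y). indicator Sb y * ennreal (hb y z)) \<in> borel_measurable (PiM (pa R b) \<mu> \<Otimes>\<^sub>M \<mu> b)"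
    by (simp add: case_prod_beta)
  interpret sb: sigma_finite_measure "\<mu> b" by (rule sf)
  have "(\<lambda>z. \<integral>\<^sup>+y. indicator Sb y * ennreal (hb y z) \<partial>\<mu> b) \<in> borel_measurable (PiM (pa R b) \<mu>)"
    using hb_meas by (rule sb.borel_measurable_nn_integral)
  then show ?thesis using \<psi> by simp
qed

lemma contradiction_core:
  fixes R :: "('n::finite \<times> 'n) set"
  assumes sf: "\<And>v. sigma_finite_measure (\<mu> v)"
    and k: "\<And>v. is_kernel R \<mu> v (h v)"
    and acyc: "acyclic R"
    and ancA: "\<And>v. v \<in> A \<Longrightarrow> pa R v \<subseteq> A"
    and aA: "a \<in> A" and bA: "b \<in> A" and ab: "a \<noteq> b" and aZ: "a \<notin> pa R b"
    and bsink: "\<And>c. c \<in> A \<Longrightarrow> (b, c) \<notin> R"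
    and fm: "f \<in> borel_measurable (PiM UNIV \<mu>)"
    and deq: "density (PiM UNIV \<mu>) f = density (PiM UNIV \<mu>) (kprod R h UNIV)"
    and T0: "T0 \<in> sets (\<mu> a)" and T1: "T1 \<in> sets (\<mu> a)" and Sb: "Sb \<in> sets (\<mu> b)"
    and \<psi>: "\<psi> \<in> borel_measurable (PiM (pa R b) \<mu>)"
    and h0: "(\<integral>\<^sup>+x. f x * (indicator T0 (x a) * indicator Sb (x b) * \<psi> (restrict x (pa R b))) \<partial>PiM UNIV \<mu>) = 0"
    and h1: "(\<integral>\<^sup>+x. f x * (indicator T1 (x a) * indicator Sb (x b) * \<psi> (restrict x (pa R b))) \<partial>PiM UNIV \<mu>) \<noteq> 0"
    and hi: "\<And>\<Phi>. \<Phi> \<in> borel_measurable (PiM (pa R b) \<mu>) \<Longrightarrow>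
       (\<integral>\<^sup>+x. f x * (indicator T0 (x a) * \<Phi> (restrict x (pa R b))) \<partial>PiM UNIV \<mu>) =
       (\<integral>\<^sup>+x. f x * (indicator T1 (x a) * \<Phi> (restrict x (pa R b))) \<partial>PiM UNIV \<mu>)"
  shows False
proof -
  define Z where "Z = pa R b"
  define g where "g = kprod R h UNIV"
  have gm: "g \<in> borel_measurable (PiM UNIV \<mu>)" unfolding g_def by (rule kprod_meas[OF k]) auto
  have eq: "(\<integral>\<^sup>+x. f x * F x \<partial>PiM UNIV \<mu>) = (\<integral>\<^sup>+x. g x * F x \<partial>PiM UNIV \<mu>)"
    if F: "F \<in> borel_measurable (PiM UNIV \<mu>)" for F
  proof -
    have "(\<integral>\<^sup>+x. f x * F x \<partial>PiM UNIV \<mu>) = (\<integral>\<^sup>+x. F x \<partial>density (PiM UNIV \<mu>) f)"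
      by (rule nn_integral_density[OF fm F, symmetric])
    also have "\<dots> = (\<integral>\<^sup>+x. F x \<partial>density (PiM UNIV \<mu>) g)" using deq by (simp add: g_def)
    also have "\<dots> = (\<integral>\<^sup>+x. g x * F x \<partial>PiM UNIV \<mu>)"
      by (rule nn_integral_density[OF gm F])
    finally show ?thesis .
  qed
  define \<Phi> where "\<Phi> = (\<lambda>z. \<psi> z * (\<integral>\<^sup>+y. indicator Sb y * ennreal (h b y z) \<partial>\<mu> b))"
  have \<Phi>m: "\<Phi> \<in> borel_measurable (PiM Z \<mu>)"
    unfolding \<Phi>_def Z_def by (rule Phi_meas[OF sf k Sb \<psi>])
  have rZ: "(\<lambda>x. restrict x Z) \<in> measurable (PiM UNIV \<mu>) (PiM Z \<mu>)"
    by (rule measurable_restrict_subset) auto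
  have \<psi>m: "(\<lambda>x. \<psi> (restrict x Z)) \<in> borel_measurable (PiM UNIV \<mu>)"
    using measurable_comp[OF rZ \<psi>[folded Z_def]] by (simp add: comp_def)
  have \<Phi>m': "(\<lambda>x. \<Phi> (restrict x Z)) \<in> borel_measurable (PiM UNIV \<mu>)"
    using measurable_comp[OF rZ \<Phi>m] by (simp add: comp_def)
  have m1: "(\<lambda>x. indicator T (x a) * indicator Sb (x b) * \<psi> (restrict x Z) :: ennreal) \<in> borel_measurable (PiM UNIV \<mu>)"
    if "T \<in> sets (\<mu> a)" for T using that Sb \<psi>m by measurable
  have m2: "(\<lambda>x. indicator T (x a) * \<Phi> (restrict x Z) :: ennreal) \<in> borel_measurable (PiM UNIV \<mu>)"
    if "T \<in> sets (\<mu> a)" for T using that \<Phi>m' by measurable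
  have Q: "(\<integral>\<^sup>+x. g x * (indicator T (x a) * indicator Sb (x b) * \<psi> (restrict x Z)) \<partial>PiM UNIV \<mu>) =
       (\<integral>\<^sup>+x. g x * (indicator T (x a) * \<Phi> (restrict x Z)) \<partial>PiM UNIV \<mu>)"
    if "T \<in> sets (\<mu> a)" for T
    unfolding g_def \<Phi>_def Z_def by (rule Q_identity[OF sf k acyc ancA aA bA ab aZ bsink that Sb \<psi>])
  have "(0::ennreal) = (\<integral>\<^sup>+x. f x * (indicator T0 (x a) * indicator Sb (x b) * \<psi> (restrict x Z)) \<partial>PiM UNIV \<mu>)"
    using h0 by (simp add: Z_def)
  also have "\<dots> = (\<integral>\<^sup>+x. g x * (indicator T0 (x a) * \<Phi> (restrict x Z)) \<partial>PiM UNIV \<mu>)"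
    using eq[OF m1[OF T0]] Q[OF T0] by simp
  also have "\<dots> = (\<integral>\<^sup>+x. f x * (indicator T0 (x a) * \<Phi> (restrict x Z)) \<partial>PiM UNIV \<mu>)"
    using eq[OF m2[OF T0]] by simp
  also have "\<dots> = (\<integral>\<^sup>+x. f x * (indicator T1 (x a) * \<Phi> (restrict x Z)) \<partial>PiM UNIV \<mu>)"
    using hi[of \<Phi>] \<Phi>m by (simp add: Z_def)
  also have "\<dots> = (\<integral>\<^sup>+x. g x * (indicator T1 (x a) * \<Phi> (restrict x Z)) \<partial>PiM UNIV \<mu>)"
    using eq[OF m2[OF T1]] by simp
  also have "\<dots> = (\<integral>\<^sup>+x. f x * (indicator T1 (x a) * indicator Sb (x b) * \<psi> (restrict x Z)) \<partial>PiM UNIV \<mu>)"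
    using eq[OF m1[OF T1]] Q[OF T1] by simp
  finally show False using h1 by (simp add: Z_def)
qed

lemma int_out:
  fixes \<mu> :: "'n::finite \<Rightarrow> 'v measure"
  assumes sf: "\<And>v. sigma_finite_measure (\<mu> v)"
    and c: "c \<in> I" and F: "F \<in> borel_measurable (PiM I \<mu>)"
  shows "(\<integral>\<^sup>+x. F x \<partial>PiM I \<mu>) = (\<integral>\<^sup>+x. (\<integral>\<^sup>+y. F (x(c := y)) \<partial>\<mu> c) \<partial>PiM (I - {c}) \<mu>)"
    and "(\<lambda>x. \<integral>\<^sup>+y. F (x(c := y)) \<partial>\<mu> c) \<in> borel_measurable (PiM (I - {c}) \<mu>)"
proof -
  interpret product_sigma_finite \<mu> by (simp add: product_sigma_finite_def sf)
  have F': "F \<in> borel_measurable (PiM (insert c (I - {c})) \<mu>)" using F by (simp add: insert_absorb c)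
  show "(\<integral>\<^sup>+x. F x \<partial>PiM I \<mu>) = (\<integral>\<^sup>+x. (\<integral>\<^sup>+y. F (x(c := y)) \<partial>\<mu> c) \<partial>PiM (I - {c}) \<mu>)"
    using product_nn_integral_insert[OF _ _ F'] by (simp add: insert_absorb c)
  have "(\<lambda>(x, y). F (x(c := y))) \<in> borel_measurable (PiM (I - {c}) \<mu> \<Otimes>\<^sub>M \<mu> c)"
    using measurable_comp[OF measurable_add_dim[of c "I - {c}" \<mu>] F'] by (simp add: comp_def case_prod_beta)
  then show "(\<lambda>x. \<integral>\<^sup>+y. F (x(c := y)) \<partial>\<mu> c) \<in> borel_measurable (PiM (I - {c}) \<mu>)"
    by (rule M.borel_measurable_nn_integral)
qed

locale twosets =
  fixes \<mu> :: "'n::finite \<Rightarrow> 'v measure" and U0 U1 :: "'n \<Rightarrow> 'v set"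
  assumes sf: "\<And>v. sigma_finite_measure (\<mu> v)"
    and U0: "\<And>v. U0 v \<in> sets (\<mu> v)" and U1: "\<And>v. U1 v \<in> sets (\<mu> v)"
    and disj: "\<And>v. U0 v \<inter> U1 v = {}"
    and m0: "\<And>v. emeasure (\<mu> v) (U0 v) = 1" and m1: "\<And>v. emeasure (\<mu> v) (U1 v) = 1"
begin

lemma int_ind_const:
  assumes U: "U \<in> sets (\<mu> v)" "emeasure (\<mu> v) U = 1" and G: "\<And>y. y \<in> U \<Longrightarrow> G y = c"
  shows "(\<integral>\<^sup>+y. indicator U y * G y \<partial>\<mu> v) = c"
proof -
  have "(\<integral>\<^sup>+y. indicator U y * G y \<partial>\<mu> v) = (\<integral>\<^sup>+y. c * indicator U y \<partial>\<mu> v)"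
    by (rule nn_integral_cong) (auto simp: G indicator_def)
  also have "\<dots> = c" using U by (simp add: nn_integral_cmult_indicator)
  finally show ?thesis .
qed

lemma ind_union: "(indicator (U0 v \<union> U1 v) y :: ennreal) = indicator (U0 v) y + indicator (U1 v) y"
  using disj[of v] by (auto simp: indicator_def)

definition hh :: ennreal where "hh = ennreal (1/2)"

lemma hh_ind: "ennreal (1/2 * indicator A y) = hh * indicator A y"
  unfolding hh_def by (cases "y \<in> A") auto

lemma half_half: "hh + hh = 1"
  unfolding hh_def by (subst ennreal_plus[symmetric]) auto

lemma hh_nz: "hh \<noteq> 0"
  unfolding hh_def by simp

lemma int_half:
  assumes G: "G \<in> borel_measurable (\<mu> v)"
  shows "(\<integral>\<^sup>+y. hh * indicator (U0 v \<union> U1 v) y * G y \<partial>\<mu> v) =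
     hh * (\<integral>\<^sup>+y. indicator (U0 v) y * G y \<partial>\<mu> v) + hh * (\<integral>\<^sup>+y. indicator (U1 v) y * G y \<partial>\<mu> v)"
proof -
  have "(\<integral>\<^sup>+y. hh * indicator (U0 v \<union> U1 v) y * G y \<partial>\<mu> v) =
     (\<integral>\<^sup>+y. hh * (indicator (U0 v) y * G y) + hh * (indicator (U1 v) y * G y) \<partial>\<mu> v)"
    by (rule nn_integral_cong) (simp only: ind_union distrib_left distrib_right mult.assoc)
  also have "\<dots> = hh * (\<integral>\<^sup>+y. indicator (U0 v) y * G y \<partial>\<mu> v) + hh * (\<integral>\<^sup>+y. indicator (U1 v) y * G y \<partial>\<mu> v)"
    using U0 U1 G by (simp add: nn_integral_add nn_integral_cmult)
  finally show ?thesis .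
qed

end

context twosets
begin

lemma kern_half: "is_kernel R \<mu> v (\<lambda>y z. 1/2 * indicator (U0 v \<union> U1 v) y)"
  unfolding is_kernel_def
proof (intro conjI allI ballI)
  show "0 \<le> 1/2 * (indicator (U0 v \<union> U1 v) y :: real)" for y by simp
  have "(\<lambda>p. 1/2 * indicator (U0 v \<union> U1 v) (fst p) :: real) \<in> borel_measurable (\<mu> v \<Otimes>\<^sub>M PiM (pa R v) \<mu>)"
    using U0 U1 by measurable
  moreover have "(\<lambda>(y, z). 1/2 * indicator (U0 v \<union> U1 v) y :: real) = (\<lambda>p. 1/2 * indicator (U0 v \<union> U1 v) (fst p))" by auto
  ultimately show "(\<lambda>(y, z). 1/2 * indicator (U0 v \<union> U1 v) y :: real) \<in> borel_measurable (\<mu> v \<Otimes>\<^sub>M PiM (pa R v) \<mu>)" by simp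
  have "(\<integral>\<^sup>+y. ennreal (1/2 * indicator (U0 v \<union> U1 v) y) \<partial>\<mu> v) = hh * emeasure (\<mu> v) (U0 v \<union> U1 v)"
    unfolding hh_ind using U0 U1 by (simp add: nn_integral_cmult_indicator)
  also have "\<dots> = hh * (1 + 1)" using plus_emeasure[OF U0 U1 disj] m0 m1 by simp
  also have "\<dots> = 1" using half_half by (simp only: distrib_left mult_1_right)
  finally show "(\<integral>\<^sup>+y. ennreal (1/2 * indicator (U0 v \<union> U1 v) y) \<partial>\<mu> v) = 1" .
qed

lemma kern_if:
  assumes Pz: "Measurable.pred (PiM (pa R v) \<mu>) Pz"
    and V1: "V1 \<in> sets (\<mu> v)" "emeasure (\<mu> v) V1 = 1" and V2: "V2 \<in> sets (\<mu> v)" "emeasure (\<mu> v) V2 = 1"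
  shows "is_kernel R \<mu> v (\<lambda>y z. indicator (if Pz z then V1 else V2) y)"
  unfolding is_kernel_def
proof (intro conjI allI ballI)
  show "0 \<le> (indicator (if Pz z then V1 else V2) y :: real)" for y z by simp
  have [measurable]: "Measurable.pred (\<mu> v \<Otimes>\<^sub>M PiM (pa R v) \<mu>) (\<lambda>p. Pz (snd p))"
    using measurable_comp[OF measurable_snd Pz] by (simp add: comp_def)
  have "(\<lambda>p. if Pz (snd p) then indicator V1 (fst p) else indicator V2 (fst p) :: real) \<in> borel_measurable (\<mu> v \<Otimes>\<^sub>M PiM (pa R v) \<mu>)"
    using V1 V2 by measurable
  moreover have "(\<lambda>(y, z). indicator (if Pz z then V1 else V2) y :: real) =
      (\<lambda>p. if Pz (snd p) then indicator V1 (fst p) else indicator V2 (fst p))" by auto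
  ultimately show "(\<lambda>(y, z). indicator (if Pz z then V1 else V2) y :: real) \<in> borel_measurable (\<mu> v \<Otimes>\<^sub>M PiM (pa R v) \<mu>)" by simp
  show "(\<integral>\<^sup>+y. ennreal (indicator (if Pz z then V1 else V2) y) \<partial>\<mu> v) = 1" for z
    using V1 V2 by (cases "Pz z") (simp_all add: ennreal_indicator)
qed

lemma prod3:
  fixes g :: "'n \<Rightarrow> 'a::comm_monoid_mult"
  assumes "a \<noteq> b" "a \<noteq> s" "b \<noteq> s"
  shows "(\<Prod>v\<in>UNIV. g v) = g a * g b * g s * (\<Prod>v\<in>-{a,b,s}. g v)"
proof -
  have "UNIV = insert a (insert b (insert s (-{a,b,s})))" by auto
  then have "(\<Prod>v\<in>UNIV. g v) = (\<Prod>v\<in>insert a (insert b (insert s (-{a,b,s}))). g v)" by simp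
  also have "\<dots> = g a * g b * g s * (\<Prod>v\<in>-{a,b,s}. g v)"
    using assms by (simp add: mult_ac)
  finally show ?thesis .
qed

end

lemma kernel_model:
  fixes R :: "('n::finite \<times> 'n) set"
  assumes sf: "\<And>v. sigma_finite_measure (\<mu> v)" and acyc: "acyclic R" and k: "\<And>v. is_kernel R \<mu> v (k v)"
  shows "density (PiM UNIV \<mu>) (kprod R k UNIV) \<in> model R \<mu>"
proof -
  have km: "kprod R k UNIV \<in> borel_measurable (PiM UNIV \<mu>)" by (rule kprod_meas[OF k]) auto
  have "(\<integral>\<^sup>+x. kprod R k UNIV x * (\<lambda>_. 1) (restrict x {}) \<partial>PiM UNIV \<mu>) = (\<integral>\<^sup>+x. kprod R k {} x * 1 \<partial>PiM {} \<mu>)"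
    by (rule marginal[OF sf k acyc]) auto
  then have tot: "(\<integral>\<^sup>+x. kprod R k UNIV x \<partial>PiM UNIV \<mu>) = 1"
    by (simp add: kprod_def PiM_empty)
  have "prob_space (density (PiM UNIV \<mu>) (kprod R k UNIV))"
  proof (rule prob_spaceI)
    have "emeasure (density (PiM UNIV \<mu>) (kprod R k UNIV)) (space (PiM UNIV \<mu>)) =
        (\<integral>\<^sup>+x. kprod R k UNIV x * indicator (space (PiM UNIV \<mu>)) x \<partial>PiM UNIV \<mu>)"
      by (rule emeasure_density[OF km]) simp
    also have "\<dots> = (\<integral>\<^sup>+x. kprod R k UNIV x \<partial>PiM UNIV \<mu>)"
      by (rule nn_integral_cong) simp
    finally show "emeasure (density (PiM UNIV \<mu>) (kprod R k UNIV)) (space (density (PiM UNIV \<mu>) (kprod R k UNIV))) = 1"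
      using tot by simp
  qed
  moreover have "kprod R k UNIV = (\<lambda>x. ennreal (\<Prod>s\<in>UNIV. k s (x s) (restrict x (pa R s))))"
    unfolding kprod_def by (intro ext prod_ennreal) (use kernel_nonneg k in metis)
  ultimately show ?thesis unfolding model_def joint_measure_def using k by auto
qed

lemma model_dens:
  fixes R :: "('n::finite \<times> 'n) set"
  assumes "P \<in> model R \<mu>"
  obtains h where "\<And>v. is_kernel R \<mu> v (h v)" "P = density (PiM UNIV \<mu>) (kprod R h UNIV)"
proof -
  obtain h where hk: "\<And>v. is_kernel R \<mu> v (h v)"
    and P: "P = density (joint_measure \<mu>) (\<lambda>x. ennreal (\<Prod>s\<in>UNIV. h s (x s) (restrict x (pa R s))))"
    using assms unfolding model_def by blast
  have "kprod R h UNIV = (\<lambda>x. ennreal (\<Prod>s\<in>UNIV. h s (x s) (restrict x (pa R s))))"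
    unfolding kprod_def by (intro ext prod_ennreal) (use kernel_nonneg hk in metis)
  then have "P = density (PiM UNIV \<mu>) (kprod R h UNIV)" using P by (simp add: joint_measure_def)
  then show ?thesis using that hk by blast
qed

lemma choose_A:
  fixes R :: "('n \<times> 'n) set"
  assumes acyc: "acyclic R" and ba: "(b, a) \<notin> R\<^sup>*"
  defines "A \<equiv> {v. (v, a) \<in> R\<^sup>* \<or> (v, b) \<in> R\<^sup>*}"
  shows "\<And>v. v \<in> A \<Longrightarrow> pa R v \<subseteq> A" "a \<in> A" "b \<in> A" "\<And>c. c \<in> A \<Longrightarrow> (b, c) \<notin> R"
proof -
  show "pa R v \<subseteq> A" if "v \<in> A" for v
  proof
    fix w assume "w \<in> pa R v"
    then have wv: "(w, v) \<in> R" by (simp add: pa_def)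
    from that consider "(v, a) \<in> R\<^sup>*" | "(v, b) \<in> R\<^sup>*" unfolding A_def by blast
    then show "w \<in> A"
    proof cases
      case 1 then show ?thesis using converse_rtrancl_into_rtrancl[OF wv 1] unfolding A_def by blast
    next
      case 2 then show ?thesis using converse_rtrancl_into_rtrancl[OF wv 2] unfolding A_def by blast
    qed
  qed
  show "a \<in> A" "b \<in> A" unfolding A_def by auto
  show "(b, c) \<notin> R" if "c \<in> A" for c
  proof
    assume bc: "(b, c) \<in> R"
    from that consider "(c, a) \<in> R\<^sup>*" | "(c, b) \<in> R\<^sup>*" unfolding A_def by blast
    then show False
    proof cases
      case 1 then show False using converse_rtrancl_into_rtrancl[OF bc 1] ba by blast
    next
      case 2
      then have "(b, b) \<in> R\<^sup>+" by (rule rtrancl_into_trancl2[OF bc])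
      then show False using acyc unfolding acyclic_def by blast
    qed
  qed
qed

lemma edge_neq: "acyclic E \<Longrightarrow> (a, b) \<in> E \<Longrightarrow> a \<noteq> b"
  unfolding acyclic_def by blast

context twosets
begin

definition kc1 :: "'n \<Rightarrow> 'n \<Rightarrow> 'n \<Rightarrow> 'n \<Rightarrow> 'v \<Rightarrow> ('n \<Rightarrow> 'v) \<Rightarrow> real" where
  "kc1 a b s v y z = (if v = s then indicator (if (z a \<in> U1 a) = (z b \<in> U1 b) then U0 s else U1 s) y
     else if v = a \<or> v = b then 1/2 * indicator (U0 v \<union> U1 v) y else indicator (U0 v) y)"

lemma kc1_kernel:
  assumes aP: "a \<in> pa E s" and bP: "b \<in> pa E s"
  shows "is_kernel E \<mu> v (kc1 a b s v)"
proof (cases "v = s")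
  case True
  have [measurable]: "(\<lambda>z. z a) \<in> measurable (PiM (pa E s) \<mu>) (\<mu> a)"
    by (rule measurable_component_singleton[OF aP])
  have [measurable]: "(\<lambda>z. z b) \<in> measurable (PiM (pa E s) \<mu>) (\<mu> b)"
    by (rule measurable_component_singleton[OF bP])
  have [measurable]: "U1 a \<in> sets (\<mu> a)" "U1 b \<in> sets (\<mu> b)" using U1 by auto
  have "Measurable.pred (PiM (pa E s) \<mu>) (\<lambda>z. (z a \<in> U1 a) = (z b \<in> U1 b))" by measurable
  from kern_if[OF this U0 m0 U1 m1] show ?thesis using True by (simp add: kc1_def[abs_def])
next
  case False
  show ?thesis
  proof (cases "v = a \<or> v = b")
    case True
    then show ?thesis using False kern_half[of E v] by (simp add: kc1_def[abs_def])
  next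
    case F2: False
    then show ?thesis using False indicator_kernel[of "U0 v" \<mu> v E, OF U0[of v] m0[of v]] by (simp add: kc1_def[abs_def])
  qed
qed

definition Rest :: "'n \<Rightarrow> 'n \<Rightarrow> 'n \<Rightarrow> ('n \<Rightarrow> 'v) \<Rightarrow> ennreal" where
  "Rest a b s x = (\<Prod>v\<in>-{a,b,s}. indicator (U0 v) (x v))"

lemma Rest_upd: "c \<in> {a, b, s} \<Longrightarrow> Rest a b s (x(c := y)) = Rest a b s x"
  unfolding Rest_def by (intro prod.cong) auto

lemma kc1_a: "a \<noteq> s \<Longrightarrow> kc1 a b s a y z = 1/2 * indicator (U0 a \<union> U1 a) y"
  by (simp add: kc1_def)

lemma kc1_b: "b \<noteq> s \<Longrightarrow> kc1 a b s b y z = 1/2 * indicator (U0 b \<union> U1 b) y"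
  by (simp add: kc1_def)

lemma kc1_form:
  assumes ab: "a \<noteq> b" and as: "a \<noteq> s" and bs: "b \<noteq> s" and aP: "a \<in> pa E s" and bP: "b \<in> pa E s"
  shows "kprod E (kc1 a b s) UNIV x = Rest a b s x * (hh * indicator (U0 a \<union> U1 a) (x a)) *
     (hh * indicator (U0 b \<union> U1 b) (x b)) * indicator (if (x a \<in> U1 a) = (x b \<in> U1 b) then U0 s else U1 s) (x s)"
proof -
  have "kprod E (kc1 a b s) UNIV x =
     ennreal (kc1 a b s a (x a) (restrict x (pa E a))) * ennreal (kc1 a b s b (x b) (restrict x (pa E b))) *
     ennreal (kc1 a b s s (x s) (restrict x (pa E s))) *
     (\<Prod>v\<in>-{a,b,s}. ennreal (kc1 a b s v (x v) (restrict x (pa E v))))"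
    unfolding kprod_def by (rule prod3[OF ab as bs])
  also have "(\<Prod>v\<in>-{a,b,s}. ennreal (kc1 a b s v (x v) (restrict x (pa E v)))) = Rest a b s x"
    unfolding Rest_def kc1_def by (intro prod.cong) (auto simp: ennreal_indicator)
  also have "ennreal (kc1 a b s a (x a) (restrict x (pa E a))) = hh * indicator (U0 a \<union> U1 a) (x a)"
    by (simp only: kc1_a[OF as] hh_ind)
  also have "ennreal (kc1 a b s b (x b) (restrict x (pa E b))) = hh * indicator (U0 b \<union> U1 b) (x b)"
    by (simp only: kc1_b[OF bs] hh_ind)
  also have "ennreal (kc1 a b s s (x s) (restrict x (pa E s))) =
      indicator (if (x a \<in> U1 a) = (x b \<in> U1 b) then U0 s else U1 s) (x s)"
    using aP bP by (simp add: kc1_def ennreal_indicator)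
  finally show ?thesis by (simp add: mult_ac)
qed

lemma notin_U1: "y \<in> U0 v \<Longrightarrow> y \<notin> U1 v"
  using disj[of v] by blast

lemma notin_U0: "y \<in> U1 v \<Longrightarrow> y \<notin> U0 v"
  using disj[of v] by blast

lemma if_ind_meas:
  fixes w :: 'v and V1 V2 :: "'v set" and i :: bool
  shows "(\<lambda>y. c * indicator (if i = (y \<in> U1 b) then V1 else V2) w :: ennreal) \<in> borel_measurable (\<mu> b)"
proof -
  have [measurable]: "U1 b \<in> sets (\<mu> b)" by (rule U1)
  have "(\<lambda>y. if i = (y \<in> U1 b) then c * indicator V1 w else c * indicator V2 w :: ennreal) \<in> borel_measurable (\<mu> b)"
    by measurable
  moreover have "(\<lambda>y. c * indicator (if i = (y \<in> U1 b) then V1 else V2) w :: ennreal) =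
      (\<lambda>y. if i = (y \<in> U1 b) then c * indicator V1 w else c * indicator V2 w)" by auto
  ultimately show ?thesis by simp
qed

lemma c1_inner:
  assumes ab: "a \<noteq> b" and as: "a \<noteq> s" and bs: "b \<noteq> s" and aP: "a \<in> pa E s" and bP: "b \<in> pa E s"
    and aZ: "a \<notin> Z" and bZ: "b \<notin> Z"
  shows "(\<integral>\<^sup>+y2. (\<integral>\<^sup>+y1. kprod E (kc1 a b s) UNIV (x(b := y2, a := y1)) *
            (indicator (if i then U1 a else U0 a) y1 * \<Phi> (restrict (x(b := y2, a := y1)) Z)) \<partial>\<mu> a) \<partial>\<mu> b)
     = (Rest a b s x * \<Phi> (restrict x Z)) * (hh * (hh * indicator (U0 s) (x s)) + hh * (hh * indicator (U1 s) (x s)))"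
proof -
  define c where "c = Rest a b s x * \<Phi> (restrict x Z)"
  define V where "V = (\<lambda>y2. if i = (y2 \<in> U1 b) then U0 s else U1 s)"
  have Ti: "(if i then U1 a else U0 a) \<in> sets (\<mu> a)" "emeasure (\<mu> a) (if i then U1 a else U0 a) = 1"
    using U0 U1 m0 m1 by auto
  have stepA: "(\<integral>\<^sup>+y1. kprod E (kc1 a b s) UNIV (x(b := y2, a := y1)) *
            (indicator (if i then U1 a else U0 a) y1 * \<Phi> (restrict (x(b := y2, a := y1)) Z)) \<partial>\<mu> a)
      = c * (hh * indicator (U0 b \<union> U1 b) y2 * (hh * indicator (V y2) (x s)))" for y2
  proof -
    have rz: "restrict (x(b := y2, a := y1)) Z = restrict x Z" for y1
      using aZ bZ by (simp add: restrict_upd_notin)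
    have rr: "Rest a b s (x(b := y2, a := y1)) = Rest a b s x" for y1
      by (simp add: Rest_upd)
    have "(\<integral>\<^sup>+y1. kprod E (kc1 a b s) UNIV (x(b := y2, a := y1)) *
            (indicator (if i then U1 a else U0 a) y1 * \<Phi> (restrict (x(b := y2, a := y1)) Z)) \<partial>\<mu> a)
       = (\<integral>\<^sup>+y1. indicator (if i then U1 a else U0 a) y1 *
           (c * (hh * indicator (U0 a \<union> U1 a) y1) * (hh * indicator (U0 b \<union> U1 b) y2) *
             indicator (if (y1 \<in> U1 a) = (y2 \<in> U1 b) then U0 s else U1 s) (x s)) \<partial>\<mu> a)"
    proof (rule nn_integral_cong)
      fix y1
      have kf: "kprod E (kc1 a b s) UNIV (x(b := y2, a := y1)) = Rest a b s x * (hh * indicator (U0 a \<union> U1 a) y1) *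
          (hh * indicator (U0 b \<union> U1 b) y2) * indicator (if (y1 \<in> U1 a) = (y2 \<in> U1 b) then U0 s else U1 s) (x s)"
        using kc1_form[OF ab as bs aP bP, of "x(b := y2, a := y1)"] ab as bs by (simp add: rr)
      show "kprod E (kc1 a b s) UNIV (x(b := y2, a := y1)) *
            (indicator (if i then U1 a else U0 a) y1 * \<Phi> (restrict (x(b := y2, a := y1)) Z)) =
          indicator (if i then U1 a else U0 a) y1 *
           (c * (hh * indicator (U0 a \<union> U1 a) y1) * (hh * indicator (U0 b \<union> U1 b) y2) *
             indicator (if (y1 \<in> U1 a) = (y2 \<in> U1 b) then U0 s else U1 s) (x s))"
        unfolding kf rz c_def by (simp only: mult_ac)
    qed
    also have "\<dots> = c * hh * (hh * indicator (U0 b \<union> U1 b) y2) * indicator (V y2) (x s)"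
    proof (rule int_ind_const[OF Ti])
      fix y1 assume y1: "y1 \<in> (if i then U1 a else U0 a)"
      then have "y1 \<in> U0 a \<union> U1 a" "(y1 \<in> U1 a) = i"
        by (cases i; auto dest: notin_U1)+
      then show "c * (hh * indicator (U0 a \<union> U1 a) y1) * (hh * indicator (U0 b \<union> U1 b) y2) *
             indicator (if (y1 \<in> U1 a) = (y2 \<in> U1 b) then U0 s else U1 s) (x s) =
          c * hh * (hh * indicator (U0 b \<union> U1 b) y2) * indicator (V y2) (x s)"
        by (simp add: V_def)
    qed
    also have "\<dots> = c * (hh * indicator (U0 b \<union> U1 b) y2 * (hh * indicator (V y2) (x s)))"
      by (simp add: mult_ac)
    finally show ?thesis .
  qed
  have Vm: "(\<lambda>y2. hh * indicator (V y2) (x s)) \<in> borel_measurable (\<mu> b)"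
    unfolding V_def by (rule if_ind_meas)
  have "(\<integral>\<^sup>+y2. c * (hh * indicator (U0 b \<union> U1 b) y2 * (hh * indicator (V y2) (x s))) \<partial>\<mu> b)
      = c * (\<integral>\<^sup>+y2. hh * indicator (U0 b \<union> U1 b) y2 * (hh * indicator (V y2) (x s)) \<partial>\<mu> b)"
    by (rule nn_integral_cmult) (use Vm U0 U1 in measurable)
  also have "(\<integral>\<^sup>+y2. hh * indicator (U0 b \<union> U1 b) y2 * (hh * indicator (V y2) (x s)) \<partial>\<mu> b) =
      hh * (\<integral>\<^sup>+y2. indicator (U0 b) y2 * (hh * indicator (V y2) (x s)) \<partial>\<mu> b) +
      hh * (\<integral>\<^sup>+y2. indicator (U1 b) y2 * (hh * indicator (V y2) (x s)) \<partial>\<mu> b)"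
    by (rule int_half[OF Vm])
  also have "(\<integral>\<^sup>+y2. indicator (U0 b) y2 * (hh * indicator (V y2) (x s)) \<partial>\<mu> b) =
      hh * indicator (if i then U1 s else U0 s) (x s)"
    by (rule int_ind_const[OF U0 m0]) (auto simp: V_def dest: notin_U1)
  also have "(\<integral>\<^sup>+y2. indicator (U1 b) y2 * (hh * indicator (V y2) (x s)) \<partial>\<mu> b) =
      hh * indicator (if i then U0 s else U1 s) (x s)"
    by (rule int_ind_const[OF U1 m1]) (auto simp: V_def)
  finally have "(\<integral>\<^sup>+y2. c * (hh * indicator (U0 b \<union> U1 b) y2 * (hh * indicator (V y2) (x s))) \<partial>\<mu> b) =
      c * (hh * (hh * indicator (U0 s) (x s)) + hh * (hh * indicator (U1 s) (x s)))"
    by (cases i) (simp_all add: add.commute)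
  then show ?thesis by (simp only: stepA c_def)
qed

lemma case1:
  fixes E :: "('n \<times> 'n) set"
  assumes acyc: "acyclic E" and as_: "(a, s) \<in> E" and bs_: "(b, s) \<in> E"
    and nj: "\<not> joined E a b" and ab: "a \<noteq> b"
    and ord: "(b, a) \<notin> (converse E)\<^sup>*"
    and incl: "model E \<mu> \<subseteq> model (converse E) \<mu>"
  shows False
proof -
  have as: "a \<noteq> s" and bs: "b \<noteq> s" using edge_neq[OF acyc as_] edge_neq[OF acyc bs_] by auto
  have aP: "a \<in> pa E s" and bP: "b \<in> pa E s" using as_ bs_ by (auto simp: pa_def)
  define R where "R = converse E"
  have acR: "acyclic R" using acyc by (simp add: R_def acyclic_converse)
  define k where "k = kc1 a b s"
  have kk: "\<And>v. is_kernel E \<mu> v (k v)" unfolding k_def by (rule kc1_kernel[OF aP bP])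
  define f where "f = kprod E k UNIV"
  have fm: "f \<in> borel_measurable (PiM UNIV \<mu>)" unfolding f_def by (rule kprod_meas[OF kk]) auto
  have "density (PiM UNIV \<mu>) f \<in> model R \<mu>"
    using kernel_model[OF sf acyc kk] incl unfolding f_def R_def by blast
  then obtain h where hk: "\<And>v. is_kernel R \<mu> v (h v)" and deq: "density (PiM UNIV \<mu>) f = density (PiM UNIV \<mu>) (kprod R h UNIV)"
    by (rule model_dens) auto
  define A where "A = {v. (v, a) \<in> R\<^sup>* \<or> (v, b) \<in> R\<^sup>*}"
  have ancA: "\<And>v. v \<in> A \<Longrightarrow> pa R v \<subseteq> A" and aA: "a \<in> A" and bA: "b \<in> A"
    and bsink: "\<And>c. c \<in> A \<Longrightarrow> (b, c) \<notin> R"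
    using choose_A[OF acR ord[folded R_def]] unfolding A_def by auto
  define Z where "Z = pa R b"
  have sZ: "s \<in> Z" using bs_ by (simp add: Z_def R_def pa_def)
  have aZ: "a \<notin> Z" using nj by (auto simp: Z_def R_def pa_def joined_def)
  have bZ: "b \<notin> Z" using bsink[OF bA] by (auto simp: Z_def pa_def)
  define \<psi> where "\<psi> = (\<lambda>z. indicator (U0 s) (z s) :: ennreal)"
  have \<psi>m: "\<psi> \<in> borel_measurable (PiM Z \<mu>)"
  proof -
    have [measurable]: "(\<lambda>z. z s) \<in> measurable (PiM Z \<mu>) (\<mu> s)"
      by (rule measurable_component_singleton[OF sZ])
    have [measurable]: "U0 s \<in> sets (\<mu> s)" by (rule U0)
    show ?thesis unfolding \<psi>_def by measurable
  qed
  have \<psi>r: "\<psi> (restrict x Z) = indicator (U0 s) (x s)" for x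
    using sZ by (simp add: \<psi>_def)
  have fform: "f x = Rest a b s x * (hh * indicator (U0 a \<union> U1 a) (x a)) *
     (hh * indicator (U0 b \<union> U1 b) (x b)) * indicator (if (x a \<in> U1 a) = (x b \<in> U1 b) then U0 s else U1 s) (x s)" for x
    unfolding f_def k_def by (rule kc1_form[OF ab as bs aP bP])
  show False
  proof (rule contradiction_core[OF sf hk acR ancA aA bA ab aZ[unfolded Z_def] bsink fm deq U0 U1 U1 \<psi>m[unfolded Z_def]])
    have "f x * (indicator (U0 a) (x a) * indicator (U1 b) (x b) * \<psi> (restrict x (pa R b))) = 0" for x
    proof (cases "x a \<in> U0 a \<and> x b \<in> U1 b")
      case True
      then have "x a \<notin> U1 a" by (auto dest: notin_U1)
      then have "indicator (if (x a \<in> U1 a) = (x b \<in> U1 b) then U0 s else U1 s) (x s) * \<psi> (restrict x (pa R b)) = (0::ennreal)"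
        using True \<psi>r[of x] by (auto simp: Z_def indicator_def dest: notin_U1)
      moreover have "f x * (indicator (U0 a) (x a) * indicator (U1 b) (x b) * \<psi> (restrict x (pa R b))) =
        (Rest a b s x * (hh * indicator (U0 a \<union> U1 a) (x a)) * (hh * indicator (U0 b \<union> U1 b) (x b)) *
          indicator (U0 a) (x a) * indicator (U1 b) (x b)) *
        (indicator (if (x a \<in> U1 a) = (x b \<in> U1 b) then U0 s else U1 s) (x s) * \<psi> (restrict x (pa R b)))"
        unfolding fform by (simp only: mult_ac)
      ultimately show ?thesis by simp
    next
      case False
      then show ?thesis by auto
    qed
    then show "(\<integral>\<^sup>+x. f x * (indicator (U0 a) (x a) * indicator (U1 b) (x b) * \<psi> (restrict x (pa R b))) \<partial>PiM UNIV \<mu>) = 0"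
      by (simp only: nn_integral_const mult_zero_left)
    define G where "G = (\<lambda>v. if v = a then (\<lambda>y. hh * indicator (U1 a) y) else if v = b then (\<lambda>y. hh * indicator (U1 b) y)
        else (\<lambda>y. indicator (U0 v) y :: ennreal))"
    have pw: "f x * (indicator (U1 a) (x a) * indicator (U1 b) (x b) * \<psi> (restrict x (pa R b))) = (\<Prod>v\<in>UNIV. G v (x v))" for x
    proof -
      have "(\<Prod>v\<in>UNIV. G v (x v)) = G a (x a) * G b (x b) * G s (x s) * (\<Prod>v\<in>-{a,b,s}. G v (x v))"
        by (rule prod3[OF ab as bs])
      also have "(\<Prod>v\<in>-{a,b,s}. G v (x v)) = Rest a b s x"
        unfolding Rest_def G_def by (intro prod.cong) auto
      finally have r: "(\<Prod>v\<in>UNIV. G v (x v)) = hh * indicator (U1 a) (x a) * (hh * indicator (U1 b) (x b)) *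
          indicator (U0 s) (x s) * Rest a b s x"
        using ab as bs by (simp add: G_def)
      show ?thesis
      proof (cases "x a \<in> U1 a \<and> x b \<in> U1 b")
        case True
        have ii: "indicator (U0 s) (x s) * (indicator (U0 s) (x s) * Rest a b s x) = indicator (U0 s) (x s) * Rest a b s x"
          by (simp add: indicator_def)
        show ?thesis unfolding r fform using True \<psi>r[of x] by (simp add: Z_def mult_ac ii)
      next
        case False
        then show ?thesis unfolding r by auto
      qed
    qed
    interpret product_sigma_finite \<mu> by (simp add: product_sigma_finite_def sf)
    have Gm: "G v \<in> borel_measurable (\<mu> v)" for v
      unfolding G_def using U0 U1 by auto
    have Gi: "(\<integral>\<^sup>+y. G v y \<partial>\<mu> v) \<noteq> 0" for v
      unfolding G_def using U0 U1 m0 m1 hh_nz by (auto simp: nn_integral_cmult_indicator)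
    have e1: "(\<integral>\<^sup>+x. (\<Prod>v\<in>UNIV. G v (x v)) \<partial>PiM UNIV \<mu>) = (\<Prod>v\<in>UNIV. \<integral>\<^sup>+y. G v y \<partial>\<mu> v)"
      by (rule product_nn_integral_prod) (auto intro: Gm)
    have e2: "(\<Prod>v\<in>UNIV. \<integral>\<^sup>+y. G v y \<partial>\<mu> v) \<noteq> 0" using Gi by simp
    show "(\<integral>\<^sup>+x. f x * (indicator (U1 a) (x a) * indicator (U1 b) (x b) * \<psi> (restrict x (pa R b))) \<partial>PiM UNIV \<mu>) \<noteq> 0"
      unfolding pw e1 by (rule e2)
    fix \<Phi> :: "('n \<Rightarrow> 'v) \<Rightarrow> ennreal" assume \<Phi>: "\<Phi> \<in> borel_measurable (PiM (pa R b) \<mu>)"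
    define W where "W = (\<lambda>x. Rest a b s x * \<Phi> (restrict x Z) * (hh * (hh * indicator (U0 s) (x s)) + hh * (hh * indicator (U1 s) (x s))))"
    have gen: "(\<integral>\<^sup>+x. f x * (indicator (if i then U1 a else U0 a) (x a) * \<Phi> (restrict x Z)) \<partial>PiM UNIV \<mu>) =
        (\<integral>\<^sup>+x. W x \<partial>PiM (UNIV - {a} - {b}) \<mu>)" for i
    proof -
      define FF where "FF = (\<lambda>x. f x * (indicator (if i then U1 a else U0 a) (x a) * \<Phi> (restrict x Z)))"
      have \<Phi>m: "(\<lambda>x. \<Phi> (restrict x Z)) \<in> borel_measurable (PiM UNIV \<mu>)"
        using measurable_comp[OF measurable_restrict_subset[of Z UNIV] \<Phi>[folded Z_def]] by (simp add: comp_def)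
      have Ti: "(if i then U1 a else U0 a) \<in> sets (\<mu> a)" using U0 U1 by auto
      have FFm: "FF \<in> borel_measurable (PiM UNIV \<mu>)" unfolding FF_def using fm \<Phi>m Ti by measurable
      have "(\<integral>\<^sup>+x. FF x \<partial>PiM UNIV \<mu>) = (\<integral>\<^sup>+x. (\<integral>\<^sup>+y. FF (x(a := y)) \<partial>\<mu> a) \<partial>PiM (UNIV - {a}) \<mu>)"
        by (rule int_out(1)[OF sf _ FFm]) simp
      also have "\<dots> = (\<integral>\<^sup>+x. (\<integral>\<^sup>+y2. (\<integral>\<^sup>+y. FF (x(b := y2, a := y)) \<partial>\<mu> a) \<partial>\<mu> b) \<partial>PiM (UNIV - {a} - {b}) \<mu>)"
        by (rule int_out(1)[OF sf _ int_out(2)[OF sf _ FFm]]) (use ab in auto)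
      also have "\<dots> = (\<integral>\<^sup>+x. W x \<partial>PiM (UNIV - {a} - {b}) \<mu>)"
        unfolding FF_def f_def k_def W_def using ab
        by (intro nn_integral_cong) (simp add: c1_inner[OF ab as bs aP bP aZ bZ])
      finally show ?thesis unfolding FF_def .
    qed
    show "(\<integral>\<^sup>+x. f x * (indicator (U0 a) (x a) * \<Phi> (restrict x (pa R b))) \<partial>PiM UNIV \<mu>) =
       (\<integral>\<^sup>+x. f x * (indicator (U1 a) (x a) * \<Phi> (restrict x (pa R b))) \<partial>PiM UNIV \<mu>)"
      using gen[of False] gen[of True] by (simp add: Z_def)
  qed
qed

definition kc2 :: "'n \<Rightarrow> 'n \<Rightarrow> 'n \<Rightarrow> 'n \<Rightarrow> 'v \<Rightarrow> ('n \<Rightarrow> 'v) \<Rightarrow> real" where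
  "kc2 a b s v y z = (if v = a \<or> v = b then indicator (if z s \<in> U1 s then U1 v else U0 v) y
     else if v = s then 1/2 * indicator (U0 s \<union> U1 s) y else indicator (U0 v) y)"

lemma kc2_kernel:
  assumes aP: "s \<in> pa E a" and bP: "s \<in> pa E b"
  shows "is_kernel E \<mu> v (kc2 a b s v)"
proof (cases "v = a \<or> v = b")
  case True
  then have sP: "s \<in> pa E v" using aP bP by auto
  have [measurable]: "(\<lambda>z. z s) \<in> measurable (PiM (pa E v) \<mu>) (\<mu> s)"
    by (rule measurable_component_singleton[OF sP])
  have [measurable]: "U1 s \<in> sets (\<mu> s)" by (rule U1)
  have "Measurable.pred (PiM (pa E v) \<mu>) (\<lambda>z. z s \<in> U1 s)" by measurable
  from kern_if[OF this U1 m1 U0 m0] show ?thesis using True by (simp add: kc2_def[abs_def])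
next
  case False
  show ?thesis
  proof (cases "v = s")
    case True
    then show ?thesis using False kern_half[of E v] by (simp add: kc2_def[abs_def])
  next
    case F2: False
    then show ?thesis using False indicator_kernel[of "U0 v" \<mu> v E, OF U0[of v] m0[of v]] by (simp add: kc2_def[abs_def])
  qed
qed

lemma kc2_s: "s \<noteq> a \<Longrightarrow> s \<noteq> b \<Longrightarrow> kc2 a b s s y z = 1/2 * indicator (U0 s \<union> U1 s) y"
  by (simp add: kc2_def)

lemma kc2_form:
  assumes ab: "a \<noteq> b" and as: "a \<noteq> s" and bs: "b \<noteq> s" and aP: "s \<in> pa E a" and bP: "s \<in> pa E b"
  shows "kprod E (kc2 a b s) UNIV x = Rest a b s x * indicator (if x s \<in> U1 s then U1 a else U0 a) (x a) *
     indicator (if x s \<in> U1 s then U1 b else U0 b) (x b) * (hh * indicator (U0 s \<union> U1 s) (x s))"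
proof -
  have "kprod E (kc2 a b s) UNIV x =
     ennreal (kc2 a b s a (x a) (restrict x (pa E a))) * ennreal (kc2 a b s b (x b) (restrict x (pa E b))) *
     ennreal (kc2 a b s s (x s) (restrict x (pa E s))) *
     (\<Prod>v\<in>-{a,b,s}. ennreal (kc2 a b s v (x v) (restrict x (pa E v))))"
    unfolding kprod_def by (rule prod3[OF ab as bs])
  also have "(\<Prod>v\<in>-{a,b,s}. ennreal (kc2 a b s v (x v) (restrict x (pa E v)))) = Rest a b s x"
    unfolding Rest_def kc2_def by (intro prod.cong) (auto simp: ennreal_indicator)
  also have "ennreal (kc2 a b s s (x s) (restrict x (pa E s))) = hh * indicator (U0 s \<union> U1 s) (x s)"
  proof -
    have "s \<noteq> a" "s \<noteq> b" using as bs by auto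
    then show ?thesis by (simp only: kc2_s[OF \<open>s \<noteq> a\<close> \<open>s \<noteq> b\<close>] hh_ind)
  qed
  also have "ennreal (kc2 a b s a (x a) (restrict x (pa E a))) = indicator (if x s \<in> U1 s then U1 a else U0 a) (x a)"
    using aP by (simp add: kc2_def ennreal_indicator)
  also have "ennreal (kc2 a b s b (x b) (restrict x (pa E b))) = indicator (if x s \<in> U1 s then U1 b else U0 b) (x b)"
    using bP by (simp add: kc2_def ennreal_indicator)
  finally show ?thesis by (simp add: mult_ac)
qed

lemma c2_inner:
  assumes ab: "a \<noteq> b" and as: "a \<noteq> s" and bs: "b \<noteq> s" and aP: "s \<in> pa E a" and bP: "s \<in> pa E b"
    and aZ: "a \<notin> Z" and bZ: "b \<notin> Z" and sZ: "s \<notin> Z"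
  shows "(\<integral>\<^sup>+y3. (\<integral>\<^sup>+y2. (\<integral>\<^sup>+y1. kprod E (kc2 a b s) UNIV (x(s := y3, b := y2, a := y1)) *
            (indicator (if i then U1 a else U0 a) y1 * \<Phi> (restrict (x(s := y3, b := y2, a := y1)) Z)) \<partial>\<mu> a) \<partial>\<mu> b) \<partial>\<mu> s)
     = (Rest a b s x * \<Phi> (restrict x Z)) * hh"
proof -
  define c where "c = Rest a b s x * \<Phi> (restrict x Z)"
  define g where "g = (\<lambda>y3. if (y3 \<in> U1 s) = i then 1 else 0 :: ennreal)"
  have Ti: "(if i then U1 a else U0 a) \<in> sets (\<mu> a)" "emeasure (\<mu> a) (if i then U1 a else U0 a) = 1"
    using U0 U1 m0 m1 by auto
  have Vb: "(if y3 \<in> U1 s then U1 b else U0 b) \<in> sets (\<mu> b)" "emeasure (\<mu> b) (if y3 \<in> U1 s then U1 b else U0 b) = 1" for y3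
    using U0 U1 m0 m1 by auto
  have stepA: "(\<integral>\<^sup>+y1. kprod E (kc2 a b s) UNIV (x(s := y3, b := y2, a := y1)) *
            (indicator (if i then U1 a else U0 a) y1 * \<Phi> (restrict (x(s := y3, b := y2, a := y1)) Z)) \<partial>\<mu> a)
      = (c * g y3 * (hh * indicator (U0 s \<union> U1 s) y3)) * indicator (if y3 \<in> U1 s then U1 b else U0 b) y2" for y2 y3
  proof -
    have rz: "restrict (x(s := y3, b := y2, a := y1)) Z = restrict x Z" for y1
      using aZ bZ sZ by (simp add: restrict_upd_notin)
    have rr: "Rest a b s (x(s := y3, b := y2, a := y1)) = Rest a b s x" for y1
      by (simp add: Rest_upd)
    have "(\<integral>\<^sup>+y1. kprod E (kc2 a b s) UNIV (x(s := y3, b := y2, a := y1)) *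
            (indicator (if i then U1 a else U0 a) y1 * \<Phi> (restrict (x(s := y3, b := y2, a := y1)) Z)) \<partial>\<mu> a)
       = (\<integral>\<^sup>+y1. indicator (if i then U1 a else U0 a) y1 *
           (c * indicator (if y3 \<in> U1 s then U1 a else U0 a) y1 * indicator (if y3 \<in> U1 s then U1 b else U0 b) y2 *
             (hh * indicator (U0 s \<union> U1 s) y3)) \<partial>\<mu> a)"
    proof (rule nn_integral_cong)
      fix y1
      have kf: "kprod E (kc2 a b s) UNIV (x(s := y3, b := y2, a := y1)) = Rest a b s x *
          indicator (if y3 \<in> U1 s then U1 a else U0 a) y1 *
          indicator (if y3 \<in> U1 s then U1 b else U0 b) y2 * (hh * indicator (U0 s \<union> U1 s) y3)"
        using kc2_form[OF ab as bs aP bP, of "x(s := y3, b := y2, a := y1)"] ab as bs by (simp add: rr)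
      show "kprod E (kc2 a b s) UNIV (x(s := y3, b := y2, a := y1)) *
            (indicator (if i then U1 a else U0 a) y1 * \<Phi> (restrict (x(s := y3, b := y2, a := y1)) Z)) =
          indicator (if i then U1 a else U0 a) y1 *
           (c * indicator (if y3 \<in> U1 s then U1 a else U0 a) y1 * indicator (if y3 \<in> U1 s then U1 b else U0 b) y2 *
             (hh * indicator (U0 s \<union> U1 s) y3))"
        unfolding kf rz c_def by (simp only: mult_ac)
    qed
    also have "\<dots> = c * g y3 * indicator (if y3 \<in> U1 s then U1 b else U0 b) y2 * (hh * indicator (U0 s \<union> U1 s) y3)"
    proof (rule int_ind_const[OF Ti])
      fix y1 assume y1: "y1 \<in> (if i then U1 a else U0 a)"
      then have "(indicator (if y3 \<in> U1 s then U1 a else U0 a) y1 :: ennreal) = g y3"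
        by (cases i; cases "y3 \<in> U1 s") (auto simp: g_def dest: notin_U1 notin_U0)
      then show "c * indicator (if y3 \<in> U1 s then U1 a else U0 a) y1 * indicator (if y3 \<in> U1 s then U1 b else U0 b) y2 *
             (hh * indicator (U0 s \<union> U1 s) y3) =
          c * g y3 * indicator (if y3 \<in> U1 s then U1 b else U0 b) y2 * (hh * indicator (U0 s \<union> U1 s) y3)"
        by simp
    qed
    also have "\<dots> = (c * g y3 * (hh * indicator (U0 s \<union> U1 s) y3)) * indicator (if y3 \<in> U1 s then U1 b else U0 b) y2"
      by (simp only: mult_ac)
    finally show ?thesis .
  qed
  have stepB: "(\<integral>\<^sup>+y2. (c * g y3 * (hh * indicator (U0 s \<union> U1 s) y3)) * indicator (if y3 \<in> U1 s then U1 b else U0 b) y2 \<partial>\<mu> b)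
      = c * (hh * indicator (U0 s \<union> U1 s) y3 * g y3)" for y3
    by (subst nn_integral_cmult_indicator[OF Vb(1)]) (simp add: Vb(2) mult_ac)
  have gm: "g \<in> borel_measurable (\<mu> s)"
  proof -
    have [measurable]: "U1 s \<in> sets (\<mu> s)" by (rule U1)
    show ?thesis unfolding g_def by measurable
  qed
  have "(\<integral>\<^sup>+y3. c * (hh * indicator (U0 s \<union> U1 s) y3 * g y3) \<partial>\<mu> s) =
      c * (\<integral>\<^sup>+y3. hh * indicator (U0 s \<union> U1 s) y3 * g y3 \<partial>\<mu> s)"
    by (rule nn_integral_cmult) (use gm U0 U1 in measurable)
  also have "(\<integral>\<^sup>+y3. hh * indicator (U0 s \<union> U1 s) y3 * g y3 \<partial>\<mu> s) =
      hh * (\<integral>\<^sup>+y3. indicator (U0 s) y3 * g y3 \<partial>\<mu> s) + hh * (\<integral>\<^sup>+y3. indicator (U1 s) y3 * g y3 \<partial>\<mu> s)"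
    by (rule int_half[OF gm])
  also have "(\<integral>\<^sup>+y3. indicator (U0 s) y3 * g y3 \<partial>\<mu> s) = (if i then 0 else 1)"
    by (rule int_ind_const[OF U0 m0]) (auto simp: g_def dest: notin_U1)
  also have "(\<integral>\<^sup>+y3. indicator (U1 s) y3 * g y3 \<partial>\<mu> s) = (if i then 1 else 0)"
    by (rule int_ind_const[OF U1 m1]) (auto simp: g_def)
  finally have "(\<integral>\<^sup>+y3. c * (hh * indicator (U0 s \<union> U1 s) y3 * g y3) \<partial>\<mu> s) = c * hh"
    by (cases i) simp_all
  then show ?thesis unfolding stepA stepB by (simp only: c_def)
qed

lemma case2:
  fixes E :: "('n \<times> 'n) set"
  assumes acyc: "acyclic E" and sa_: "(s, a) \<in> E" and sb_: "(s, b) \<in> E"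
    and nj: "\<not> joined E a b" and ab: "a \<noteq> b"
    and ord: "(b, a) \<notin> (converse E)\<^sup>*"
    and incl: "model E \<mu> \<subseteq> model (converse E) \<mu>"
  shows False
proof -
  have as: "a \<noteq> s" and bs: "b \<noteq> s" using edge_neq[OF acyc sa_] edge_neq[OF acyc sb_] by auto
  have aP: "s \<in> pa E a" and bP: "s \<in> pa E b" using sa_ sb_ by (auto simp: pa_def)
  define R where "R = converse E"
  have acR: "acyclic R" using acyc by (simp add: R_def acyclic_converse)
  define k where "k = kc2 a b s"
  have kk: "\<And>v. is_kernel E \<mu> v (k v)" unfolding k_def by (rule kc2_kernel[OF aP bP])
  define f where "f = kprod E k UNIV"
  have fm: "f \<in> borel_measurable (PiM UNIV \<mu>)" unfolding f_def by (rule kprod_meas[OF kk]) auto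
  have "density (PiM UNIV \<mu>) f \<in> model R \<mu>"
    using kernel_model[OF sf acyc kk] incl unfolding f_def R_def by blast
  then obtain h where hk: "\<And>v. is_kernel R \<mu> v (h v)" and deq: "density (PiM UNIV \<mu>) f = density (PiM UNIV \<mu>) (kprod R h UNIV)"
    by (rule model_dens) auto
  define A where "A = {v. (v, a) \<in> R\<^sup>* \<or> (v, b) \<in> R\<^sup>*}"
  have ancA: "\<And>v. v \<in> A \<Longrightarrow> pa R v \<subseteq> A" and aA: "a \<in> A" and bA: "b \<in> A"
    and bsink: "\<And>c. c \<in> A \<Longrightarrow> (b, c) \<notin> R"
    using choose_A[OF acR ord[folded R_def]] unfolding A_def by auto
  define Z where "Z = pa R b"
  have sZ: "s \<notin> Z"
  proof
    assume "s \<in> Z"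
    then have "(b, s) \<in> E" by (simp add: Z_def R_def pa_def)
    then have "(s, s) \<in> E\<^sup>+" using sb_ by auto
    then show False using acyc unfolding acyclic_def by blast
  qed
  have aZ: "a \<notin> Z" using nj by (auto simp: Z_def R_def pa_def joined_def)
  have bZ: "b \<notin> Z" using bsink[OF bA] by (auto simp: Z_def pa_def)
  define \<psi> where "\<psi> = (\<lambda>z::'n \<Rightarrow> 'v. 1 :: ennreal)"
  have \<psi>m: "\<psi> \<in> borel_measurable (PiM Z \<mu>)" unfolding \<psi>_def by simp
  have fform: "f x = Rest a b s x * indicator (if x s \<in> U1 s then U1 a else U0 a) (x a) *
     indicator (if x s \<in> U1 s then U1 b else U0 b) (x b) * (hh * indicator (U0 s \<union> U1 s) (x s))" for x
    unfolding f_def k_def by (rule kc2_form[OF ab as bs aP bP])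
  show False
  proof (rule contradiction_core[OF sf hk acR ancA aA bA ab aZ[unfolded Z_def] bsink fm deq U0 U1 U1 \<psi>m[unfolded Z_def]])
    have "f x * (indicator (U0 a) (x a) * indicator (U1 b) (x b) * \<psi> (restrict x (pa R b))) = 0" for x
    proof (cases "x s \<in> U1 s")
      case True
      have "indicator (U1 a) (x a) * indicator (U0 a) (x a) = (0::ennreal)"
        by (auto simp: indicator_def dest: notin_U1)
      moreover have "f x * (indicator (U0 a) (x a) * indicator (U1 b) (x b) * \<psi> (restrict x (pa R b))) =
          (indicator (U1 a) (x a) * indicator (U0 a) (x a)) * (Rest a b s x * indicator (U1 b) (x b) *
            (hh * indicator (U0 s \<union> U1 s) (x s)) * indicator (U1 b) (x b))"
        unfolding fform using True by (simp add: \<psi>_def mult_ac)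
      ultimately show ?thesis by simp
    next
      case False
      have "indicator (U0 b) (x b) * indicator (U1 b) (x b) = (0::ennreal)"
        by (auto simp: indicator_def dest: notin_U1)
      moreover have "f x * (indicator (U0 a) (x a) * indicator (U1 b) (x b) * \<psi> (restrict x (pa R b))) =
          (indicator (U0 b) (x b) * indicator (U1 b) (x b)) * (Rest a b s x * indicator (U0 a) (x a) *
            (hh * indicator (U0 s \<union> U1 s) (x s)) * indicator (U0 a) (x a))"
        unfolding fform using False by (simp add: \<psi>_def mult_ac)
      ultimately show ?thesis by simp
    qed
    then show "(\<integral>\<^sup>+x. f x * (indicator (U0 a) (x a) * indicator (U1 b) (x b) * \<psi> (restrict x (pa R b))) \<partial>PiM UNIV \<mu>) = 0"
      by (simp only: nn_integral_const mult_zero_left)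
    define G where "G = (\<lambda>v. if v = a then (\<lambda>y. indicator (U1 a) y) else if v = b then (\<lambda>y. indicator (U1 b) y)
        else if v = s then (\<lambda>y. hh * indicator (U1 s) y) else (\<lambda>y. indicator (U0 v) y :: ennreal))"
    have pw: "f x * (indicator (U1 a) (x a) * indicator (U1 b) (x b) * \<psi> (restrict x (pa R b))) = (\<Prod>v\<in>UNIV. G v (x v))" for x
    proof -
      have "(\<Prod>v\<in>UNIV. G v (x v)) = G a (x a) * G b (x b) * G s (x s) * (\<Prod>v\<in>-{a,b,s}. G v (x v))"
        by (rule prod3[OF ab as bs])
      also have "(\<Prod>v\<in>-{a,b,s}. G v (x v)) = Rest a b s x"
        unfolding Rest_def G_def by (intro prod.cong) auto
      finally have r: "(\<Prod>v\<in>UNIV. G v (x v)) = indicator (U1 a) (x a) * indicator (U1 b) (x b) *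
          (hh * indicator (U1 s) (x s)) * Rest a b s x"
        using ab as bs by (simp add: G_def)
      show ?thesis
      proof (cases "x s \<in> U1 s")
        case True
        have ii: "indicator (U1 a) (x a) * indicator (U1 a) (x a) = (indicator (U1 a) (x a) :: ennreal)"
          "indicator (U1 b) (x b) * indicator (U1 b) (x b) = (indicator (U1 b) (x b) :: ennreal)"
          by (simp_all add: indicator_def)
        have "f x * (indicator (U1 a) (x a) * indicator (U1 b) (x b) * \<psi> (restrict x (pa R b))) =
            (indicator (U1 a) (x a) * indicator (U1 a) (x a)) * (indicator (U1 b) (x b) * indicator (U1 b) (x b)) *
            (hh * Rest a b s x)"
          unfolding fform using True by (simp add: \<psi>_def mult_ac)
        then show ?thesis unfolding r ii using True by (simp add: mult_ac)
      next
        case False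
        then have "f x * (indicator (U1 a) (x a) * indicator (U1 b) (x b) * \<psi> (restrict x (pa R b))) = 0"
          unfolding fform by (auto simp: indicator_def dest: notin_U1)
        then show ?thesis unfolding r using False by simp
      qed
    qed
    interpret product_sigma_finite \<mu> by (simp add: product_sigma_finite_def sf)
    have Gm: "G v \<in> borel_measurable (\<mu> v)" for v
      unfolding G_def using U0 U1 by auto
    have Gi: "(\<integral>\<^sup>+y. G v y \<partial>\<mu> v) \<noteq> 0" for v
      unfolding G_def using U0 U1 m0 m1 hh_nz by (auto simp: nn_integral_cmult_indicator)
    have e1: "(\<integral>\<^sup>+x. (\<Prod>v\<in>UNIV. G v (x v)) \<partial>PiM UNIV \<mu>) = (\<Prod>v\<in>UNIV. \<integral>\<^sup>+y. G v y \<partial>\<mu> v)"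
      by (rule product_nn_integral_prod) (auto intro: Gm)
    have e2: "(\<Prod>v\<in>UNIV. \<integral>\<^sup>+y. G v y \<partial>\<mu> v) \<noteq> 0" using Gi by simp
    show "(\<integral>\<^sup>+x. f x * (indicator (U1 a) (x a) * indicator (U1 b) (x b) * \<psi> (restrict x (pa R b))) \<partial>PiM UNIV \<mu>) \<noteq> 0"
      unfolding pw e1 by (rule e2)
    fix \<Phi> :: "('n \<Rightarrow> 'v) \<Rightarrow> ennreal" assume \<Phi>: "\<Phi> \<in> borel_measurable (PiM (pa R b) \<mu>)"
    define W where "W = (\<lambda>x. Rest a b s x * \<Phi> (restrict x Z) * hh)"
    have gen: "(\<integral>\<^sup>+x. f x * (indicator (if i then U1 a else U0 a) (x a) * \<Phi> (restrict x Z)) \<partial>PiM UNIV \<mu>) =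
        (\<integral>\<^sup>+x. W x \<partial>PiM (UNIV - {a} - {b} - {s}) \<mu>)" for i
    proof -
      define FF where "FF = (\<lambda>x. f x * (indicator (if i then U1 a else U0 a) (x a) * \<Phi> (restrict x Z)))"
      have \<Phi>m: "(\<lambda>x. \<Phi> (restrict x Z)) \<in> borel_measurable (PiM UNIV \<mu>)"
        using measurable_comp[OF measurable_restrict_subset[of Z UNIV] \<Phi>[folded Z_def]] by (simp add: comp_def)
      have Ti: "(if i then U1 a else U0 a) \<in> sets (\<mu> a)" using U0 U1 by auto
      have FFm: "FF \<in> borel_measurable (PiM UNIV \<mu>)" unfolding FF_def using fm \<Phi>m Ti by measurable
      have m1: "(\<lambda>x. \<integral>\<^sup>+y. FF (x(a := y)) \<partial>\<mu> a) \<in> borel_measurable (PiM (UNIV - {a}) \<mu>)"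
        by (rule int_out(2)[OF sf _ FFm]) simp
      have m2: "(\<lambda>x. \<integral>\<^sup>+y2. (\<integral>\<^sup>+y. FF (x(b := y2, a := y)) \<partial>\<mu> a) \<partial>\<mu> b) \<in> borel_measurable (PiM (UNIV - {a} - {b}) \<mu>)"
        using int_out(2)[OF sf _ m1, of b] ab by simp
      have "(\<integral>\<^sup>+x. FF x \<partial>PiM UNIV \<mu>) = (\<integral>\<^sup>+x. (\<integral>\<^sup>+y. FF (x(a := y)) \<partial>\<mu> a) \<partial>PiM (UNIV - {a}) \<mu>)"
        by (rule int_out(1)[OF sf _ FFm]) simp
      also have "\<dots> = (\<integral>\<^sup>+x. (\<integral>\<^sup>+y2. (\<integral>\<^sup>+y. FF (x(b := y2, a := y)) \<partial>\<mu> a) \<partial>\<mu> b) \<partial>PiM (UNIV - {a} - {b}) \<mu>)"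
        by (rule int_out(1)[OF sf _ m1]) (use ab in auto)
      also have "\<dots> = (\<integral>\<^sup>+x. (\<integral>\<^sup>+y3. (\<integral>\<^sup>+y2. (\<integral>\<^sup>+y. FF (x(s := y3, b := y2, a := y)) \<partial>\<mu> a) \<partial>\<mu> b) \<partial>\<mu> s)
            \<partial>PiM (UNIV - {a} - {b} - {s}) \<mu>)"
        by (rule int_out(1)[OF sf _ m2]) (use as bs in auto)
      also have "\<dots> = (\<integral>\<^sup>+x. W x \<partial>PiM (UNIV - {a} - {b} - {s}) \<mu>)"
        unfolding FF_def f_def k_def W_def using ab
        by (intro nn_integral_cong) (simp add: c2_inner[OF ab as bs aP bP aZ bZ sZ])
      finally show ?thesis unfolding FF_def .
    qed
    show "(\<integral>\<^sup>+x. f x * (indicator (U0 a) (x a) * \<Phi> (restrict x (pa R b))) \<partial>PiM UNIV \<mu>) =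
       (\<integral>\<^sup>+x. f x * (indicator (U1 a) (x a) * \<Phi> (restrict x (pa R b))) \<partial>PiM UNIV \<mu>)"
      using gen[of False] gen[of True] by (simp add: Z_def)
  qed
qed

end


lemma one_direction:
  fixes R :: "('n \<times> 'n) set"
  assumes "acyclic R" "a \<noteq> b"
  shows "(b, a) \<notin> R\<^sup>* \<or> (a, b) \<notin> R\<^sup>*"
proof (rule ccontr)
  assume "\<not> ((b, a) \<notin> R\<^sup>* \<or> (a, b) \<notin> R\<^sup>*)"
  then have ba: "(b, a) \<in> R\<^sup>*" and abs: "(a, b) \<in> R\<^sup>*" by auto
  from abs assms(2) have "(a, b) \<in> R\<^sup>+" by (simp add: rtrancl_eq_or_trancl)
  then have "(a, a) \<in> R\<^sup>+" using ba by (rule trancl_rtrancl_trancl)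
  then show False using assms(1) unfolding acyclic_def by blast
qed

lemma joined_sym: "joined E a b = joined E b a"
  by (auto simp: joined_def)

theorem theorem4:
  fixes E :: "('n::finite \<times> 'n) set"
    and \<mu> :: "'n \<Rightarrow> (nat \<Rightarrow> real) measure"
  assumes "acyclic E"
    and "\<And>s. state_space (\<mu> s)"
  shows "model E \<mu> \<subseteq> model (converse E) \<mu> \<longleftrightarrow>
         (\<forall>s. complete_set E (pa E s) \<and> complete_set E (ch E s))"
proof
  assume comp: "\<forall>s. complete_set E (pa E s) \<and> complete_set E (ch E s)"
  show "model E \<mu> \<subseteq> model (converse E) \<mu>" by (rule if_dir[OF assms comp])
next
  assume incl: "model E \<mu> \<subseteq> model (converse E) \<mu>"
  have acR: "acyclic (converse E)" using assms(1) by (simp add: acyclic_converse)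
  obtain U0 U1 where U: "\<And>v. U0 v \<in> sets (\<mu> v)" "\<And>v. U1 v \<in> sets (\<mu> v)" "\<And>v. U0 v \<inter> U1 v = {}"
    "\<And>v. emeasure (\<mu> v) (U0 v) = 1" "\<And>v. emeasure (\<mu> v) (U1 v) = 1"
    by (rule default_kernels[of \<mu>, OF assms(2)]) blast
  interpret twosets \<mu> U0 U1
    by (simp add: twosets_def U ss_sigma_finite[OF assms(2)])
  show "\<forall>s. complete_set E (pa E s) \<and> complete_set E (ch E s)"
  proof (intro allI conjI)
    fix s
    show "complete_set E (pa E s)"
      unfolding complete_set_def
    proof (intro ballI impI)
      fix a b assume a: "a \<in> pa E s" and b: "b \<in> pa E s" and ab: "a \<noteq> b"
      show "joined E a b"
      proof (rule ccontr)
        assume nj: "\<not> joined E a b"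
        have as: "(a, s) \<in> E" and bs: "(b, s) \<in> E" using a b by (auto simp: pa_def)
        from one_direction[OF acR ab] show False
        proof
          assume "(b, a) \<notin> (converse E)\<^sup>*"
          then show False by (rule case1[OF assms(1) as bs nj ab _ incl])
        next
          assume "(a, b) \<notin> (converse E)\<^sup>*"
          moreover have "\<not> joined E b a" using nj by (auto simp: joined_def)
          ultimately show False using ab by (intro case1[OF assms(1) bs as _ _ _ incl]) auto
        qed
      qed
    qed
    show "complete_set E (ch E s)"
      unfolding complete_set_def
    proof (intro ballI impI)
      fix a b assume a: "a \<in> ch E s" and b: "b \<in> ch E s" and ab: "a \<noteq> b"
      show "joined E a b"
      proof (rule ccontr)
        assume nj: "\<not> joined E a b"
        have sa: "(s, a) \<in> E" and sb: "(s, b) \<in> E" using a b by (auto simp: ch_def)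
        from one_direction[OF acR ab] show False
        proof
          assume "(b, a) \<notin> (converse E)\<^sup>*"
          then show False by (rule case2[OF assms(1) sa sb nj ab _ incl])
        next
          assume "(a, b) \<notin> (converse E)\<^sup>*"
          moreover have "\<not> joined E b a" using nj by (auto simp: joined_def)
          ultimately show False using ab by (intro case2[OF assms(1) sb sa _ _ _ incl]) auto
        qed
      qed
    qed
  qed
qed

end
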